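(* Fix $m \in \mathbb{N}$, an integer $k \geq 3$ and $q > q_{k-1}$. Then for every $0 \le i \le m$, $\tau(P_i(q)) \geq \tau(\pi_q(S_{k-1}))$, and $\tau(Q_m(q)) \geq \tau(\pi_q(S_{k-1}))$.
   Context: $q_j$ ($j\ge2$) is the unique root in $(1,2)$ of $x^j - x^{j-1} - \cdots - x - 1 = 0$. For $q \in (1,2)$, $\pi_q((\epsilon_j)_{j\ge1}) = \sum_{j\ge1}\epsilon_j q^{-j}$. Words are written by concatenation, $a^n$ is $n$ repetitions of $a$ and $w^\infty$ the infinite repetition of $w$. A sequence avoids a word $w$ if $w$ does not occur as a block of consecutive entries. $S_{k-1}$ is the set of $(\epsilon_j) \in \{0,1\}^\mathbb{N}$ avoiding $01^{k-1}$ and $10^{k-1}$. $g_{q,k}(x) = q^{-k}x + \sum_{j=1}^{k-1}q^{-j}$ (equal to $f_1^{-(k-1)}\circ f_0^{-1}$ with $f_0(x) = qx$, $f_1(x) = qx-1$), $g_{q,k}^i$ its $i$-fold composition. Define $P_i(q) = g_{q,k}^i(\pi_q(S_{k-1})+1) \cap \big[g_{q,k}^i(1),\ g_{q,k}^i\big(1 + q^{-(m-i)k}\pi_q(0^{k-3}(01^{k-1})^\infty)\big)\big]$ for $0\le i\le m$, and $Q_m(q) = g_{q,k}^m(\pi_q(S_{k-1})) \cap \big[g_{q,k}^m(\pi_q(1^{k-3}(10^{k-1})^\infty)),\ g_{q,k}^m(\pi_q(1^\infty))\big]$. Thickness: for a compact $C \subset \mathbb{R}$, remove from $\mathrm{conv}(C)$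 the bounded gaps (maximal open intervals of $\mathrm{conv}(C)\setminus C$) $G_1, G_2, \dots$ in order of non-increasing length; when $G_n$ is removed it splits a closed interval into a left bridge $B_n^L$ and right bridge $B_n^R$. Then $\tau(C) = \inf_n \min(|B_n^L|/|G_n|, |B_n^R|/|G_n|)$ (independent of tie-breaking; $|\cdot|$ is length). *)

theory Defs
  imports "HOL-Analysis.Analysis"
begin

definition multinacci :: "nat \<Rightarrow> real" where
  "multinacci j = (THE x. 1 < x \<and> x < 2 \<and> x ^ j = (\<Sum>i<j. x ^ i))"

text \<open>0-1 sequences are functions nat => nat; index n here corresponds to index n+1 in the paper.\<close>
definition pi_q :: "real \<Rightarrow> (nat \<Rightarrow> nat) \<Rightarrow> real" where
  "pi_q q eps = (\<Sum>j. real (eps j) / q ^ (Suc j))"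

definition eventually_periodic :: "nat list \<Rightarrow> nat list \<Rightarrow> nat \<Rightarrow> nat" where
  "eventually_periodic u w n =
     (if n < length u then u ! n else w ! ((n - length u) mod length w))"

definition occurs_in :: "nat list \<Rightarrow> (nat \<Rightarrow> nat) \<Rightarrow> bool" where
  "occurs_in w eps \<longleftrightarrow> (\<exists>n. \<forall>i<length w. eps (n + i) = w ! i)"

definition avoids :: "(nat \<Rightarrow> nat) \<Rightarrow> nat list \<Rightarrow> bool" where
  "avoids eps w \<longleftrightarrow> \<not> occurs_in w eps"

definition S_set :: "nat \<Rightarrow> (nat \<Rightarrow> nat) set" where
  "S_set j = {eps. (\<forall>n. eps n \<in> {0, 1}) \<and>
                   avoids eps (0 # replicate j 1) \<and> avoids eps (1 # replicate j 0)}"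

definition g_qk :: "real \<Rightarrow> nat \<Rightarrow> real \<Rightarrow> real" where
  "g_qk q k x = x / q ^ k + (\<Sum>j\<in>{1..k-1}. 1 / q ^ j)"

definition P_set :: "real \<Rightarrow> nat \<Rightarrow> nat \<Rightarrow> nat \<Rightarrow> real set" where
  "P_set q k m i =
     (g_qk q k ^^ i) ` ((\<lambda>x. x + 1) ` (pi_q q ` S_set (k - 1))) \<inter>
     {(g_qk q k ^^ i) 1 ..
      (g_qk q k ^^ i) (1 + pi_q q (eventually_periodic (replicate (k - 3) 0)
                                      (0 # replicate (k - 1) 1)) / q ^ ((m - i) * k))}"

definition Q_set :: "real \<Rightarrow> nat \<Rightarrow> nat \<Rightarrow> real set" where
  "Q_set q k m =
     (g_qk q k ^^ m) ` (pi_q q ` S_set (k - 1)) \<inter>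
     {(g_qk q k ^^ m) (pi_q q (eventually_periodic (replicate (k - 3) 1)
                                  (1 # replicate (k - 1) 0))) ..
      (g_qk q k ^^ m) (pi_q q (eventually_periodic [] [1]))}"

text \<open>Thickness. Bounded gaps of C: maximal open intervals (a,b) of conv(C) - C,
  i.e. pairs a<b of points of C with no point of C strictly between.\<close>
definition gaps :: "real set \<Rightarrow> (real \<times> real) set" where
  "gaps C = {(a, b). a \<in> C \<and> b \<in> C \<and> a < b \<and> {a<..<b} \<inter> C = {}}"

definition glen :: "real \<times> real \<Rightarrow> real" where
  "glen G = snd G - fst G"

definition gap_enum :: "real set \<Rightarrow> (nat \<Rightarrow> real \<times> real) \<Rightarrow> nat set \<Rightarrow> bool" where
  "gap_enum C e I \<longleftrightarrow> (I = UNIV \<or> (\<exists>N. I = {..<N})) \<and> bij_betw e I (gaps C) \<and>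
     (\<forall>i\<in>I. \<forall>j\<in>I. i \<le> j \<longrightarrow> glen (e j) \<le> glen (e i))"

text \<open>When G_n is removed, the closed interval containing it is bounded by the nearest
  endpoints of previously removed gaps (or by min C / max C).\<close>
definition left_bridge_len :: "real set \<Rightarrow> (nat \<Rightarrow> real \<times> real) \<Rightarrow> nat \<Rightarrow> real" where
  "left_bridge_len C e n =
     fst (e n) - Max ({Inf C} \<union> {snd (e j) | j. j < n \<and> snd (e j) \<le> fst (e n)})"

definition right_bridge_len :: "real set \<Rightarrow> (nat \<Rightarrow> real \<times> real) \<Rightarrow> nat \<Rightarrow> real" where
  "right_bridge_len C e n =
     Min ({Sup C} \<union> {fst (e j) | j. j < n \<and> snd (e n) \<le> fst (e j)}) - snd (e n)"

text \<open>Thickness (value +\<infinity> when there are no bounded gaps). The value is independent of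
  the chosen enumeration; we pick one by choice.\<close>
definition thickness :: "real set \<Rightarrow> ereal" where
  "thickness C = (SOME t. \<exists>e I. gap_enum C e I \<and>
      t = (INF n\<in>I. ereal (min (left_bridge_len C e n) (right_bridge_len C e n) / glen (e n))))"

end

theory Submission
  imports Defs
begin


lemma gap_disj:
  assumes "(a,b) \<in> gaps K" "(a',b') \<in> gaps K" "a < a'"
  shows "b \<le> a'"
proof (rule ccontr)
  assume "\<not> b \<le> a'"
  have e: "{a<..<b} \<inter> K = {}" "a' \<in> K" using assms by (auto simp: gaps_def)
  have "a' \<in> {a<..<b}" using assms \<open>\<not> b \<le> a'\<close> by auto
  with e show False by blast
qed

lemma gap_fst_inj:
  assumes "G \<in> gaps K" "G' \<in> gaps K" "fst G = fst G'"
  shows "G = G'"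
proof -
  obtain a b a' b' where G: "G = (a,b)" and G': "G' = (a',b')" by (cases G, cases G')
  have "a = a'" using assms G G' by simp
  show ?thesis
  proof (rule ccontr)
    assume "G \<noteq> G'"
    then have "b \<noteq> b'" using G G' \<open>a = a'\<close> by simp
    then consider "b < b'" | "b' < b" by linarith
    then show False
    proof cases
      case 1
      then have "b \<in> {a'<..<b'} \<inter> K" using assms G G' \<open>a = a'\<close> by (auto simp: gaps_def)
      then show False using assms G' by (auto simp: gaps_def)
    next
      case 2
      then have "b' \<in> {a<..<b} \<inter> K" using assms G G' \<open>a = a'\<close> by (auto simp: gaps_def)
      then show False using assms G by (auto simp: gaps_def)
    qed
  qed
qed

lemma gap_glen_pos: "G \<in> gaps K \<Longrightarrow> glen G > 0"
  by (auto simp: gaps_def glen_def)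

lemma finite_big_gaps:
  assumes "bdd_below K" "bdd_above K" "\<epsilon> > 0"
  shows "finite {G \<in> gaps K. \<epsilon> \<le> glen G}"
proof -
  obtain lo where lo: "\<And>x. x \<in> K \<Longrightarrow> lo \<le> x" using assms(1) by (auto simp: bdd_below_def)
  obtain hi where hi: "\<And>x. x \<in> K \<Longrightarrow> x \<le> hi" using assms(2) by (auto simp: bdd_above_def)
  let ?B = "{G \<in> gaps K. \<epsilon> \<le> glen G}"
  let ?f = "\<lambda>G. \<lfloor>fst G / \<epsilon>\<rfloor>"
  have inj: "inj_on ?f ?B"
  proof (rule inj_onI)
    fix G G' assume G: "G \<in> ?B" and G': "G' \<in> ?B" and eq: "?f G = ?f G'"
    show "G = G'"
    proof (rule ccontr)
      assume ne: "G \<noteq> G'"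
      then have "fst G \<noteq> fst G'" using G G' gap_fst_inj by blast
      then consider "fst G < fst G'" | "fst G' < fst G" by linarith
      then show False
      proof cases
        case 1
        have "snd G \<le> fst G'" using gap_disj[of "fst G" "snd G" K "fst G'" "snd G'"] G G' 1 by auto
        then have "fst G + \<epsilon> \<le> fst G'" using G by (auto simp: glen_def)
        then have "(fst G + \<epsilon>) / \<epsilon> \<le> fst G' / \<epsilon>" using assms(3) by (simp add: divide_right_mono)
        moreover have "(fst G + \<epsilon>) / \<epsilon> = fst G / \<epsilon> + 1" using assms(3) by (simp add: add_divide_distrib)
        ultimately have "fst G / \<epsilon> + 1 \<le> fst G' / \<epsilon>" by simp
        then have "?f G < ?f G'" by linarith
        then show False using eq by simp
      next
        case 2
        have "snd G' \<le> fst G" using gap_disj[of "fst G'" "snd G'" K "fst G" "snd G"] G G' 2 by auto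
        then have "fst G' + \<epsilon> \<le> fst G" using G' by (auto simp: glen_def)
        then have "(fst G' + \<epsilon>) / \<epsilon> \<le> fst G / \<epsilon>" using assms(3) by (simp add: divide_right_mono)
        moreover have "(fst G' + \<epsilon>) / \<epsilon> = fst G' / \<epsilon> + 1" using assms(3) by (simp add: add_divide_distrib)
        ultimately have "fst G' / \<epsilon> + 1 \<le> fst G / \<epsilon>" by simp
        then have "?f G' < ?f G" by linarith
        then show False using eq by simp
      qed
    qed
  qed
  have "?f ` ?B \<subseteq> {\<lfloor>lo / \<epsilon>\<rfloor> .. \<lfloor>hi / \<epsilon>\<rfloor>}"
  proof
    fix z assume "z \<in> ?f ` ?B"
    then obtain G where G: "G \<in> ?B" "z = ?f G" by auto
    then have "fst G \<in> K" by (auto simp: gaps_def)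
    then have "lo \<le> fst G" "fst G \<le> hi" using lo hi by auto
    then have "lo / \<epsilon> \<le> fst G / \<epsilon>" "fst G / \<epsilon> \<le> hi / \<epsilon>" using assms(3)
      by (auto simp: divide_right_mono)
    then show "z \<in> {\<lfloor>lo / \<epsilon>\<rfloor> .. \<lfloor>hi / \<epsilon>\<rfloor>}" using G by (auto intro: floor_mono)
  qed
  then have "finite (?f ` ?B)" by (rule finite_subset) simp
  then show ?thesis using inj finite_imageD by blast
qed

definition gprec :: "real \<times> real \<Rightarrow> real \<times> real \<Rightarrow> bool" where
  "gprec G' G \<longleftrightarrow> glen G < glen G' \<or> (glen G' = glen G \<and> fst G' < fst G)"

definition gpred :: "real set \<Rightarrow> real \<times> real \<Rightarrow> (real \<times> real) set" where
  "gpred K G = {G' \<in> gaps K. gprec G' G}"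

definition grank :: "real set \<Rightarrow> real \<times> real \<Rightarrow> nat" where
  "grank K G = card (gpred K G)"

lemma gpred_finite:
  assumes "bdd_below K" "bdd_above K" "G \<in> gaps K"
  shows "finite (gpred K G)"
proof -
  have "gpred K G \<subseteq> {G' \<in> gaps K. glen G \<le> glen G'}"
    by (auto simp: gpred_def gprec_def)
  moreover have "finite {G' \<in> gaps K. glen G \<le> glen G'}"
    using finite_big_gaps[OF assms(1,2) gap_glen_pos[OF assms(3)]] by simp
  ultimately show ?thesis by (rule finite_subset)
qed

lemma gprec_total:
  assumes "G \<in> gaps K" "G' \<in> gaps K" "G \<noteq> G'"
  shows "gprec G G' \<or> gprec G' G"
proof -
  have "fst G \<noteq> fst G'" using gap_fst_inj assms by blast
  then show ?thesis unfolding gprec_def by linarith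
qed

lemma gprec_trans: "gprec a b \<Longrightarrow> gprec b c \<Longrightarrow> gprec a c"
  unfolding gprec_def by linarith

lemma gprec_irrefl: "\<not> gprec a a"
  unfolding gprec_def by linarith

lemma gpred_psubset:
  assumes "G' \<in> gaps K" "gprec G' G"
  shows "gpred K G' \<subset> gpred K G"
proof -
  have "gpred K G' \<subseteq> gpred K G" unfolding gpred_def using assms gprec_trans by blast
  moreover have "G' \<in> gpred K G" "G' \<notin> gpred K G'" using assms gprec_irrefl by (auto simp: gpred_def)
  ultimately show ?thesis by blast
qed

lemma grank_less:
  assumes "bdd_below K" "bdd_above K" "G \<in> gaps K" "G' \<in> gaps K" "gprec G' G"
  shows "grank K G' < grank K G"
  unfolding grank_def
  by (rule psubset_card_mono[OF gpred_finite[OF assms(1,2,3)] gpred_psubset[OF assms(4,5)]])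

lemma grank_inj:
  assumes "bdd_below K" "bdd_above K"
  shows "inj_on (grank K) (gaps K)"
proof (rule inj_onI, rule ccontr)
  fix G G' assume G: "G \<in> gaps K" "G' \<in> gaps K" "grank K G = grank K G'" "G \<noteq> G'"
  then consider "gprec G G'" | "gprec G' G" using gprec_total by blast
  then show False
  proof cases
    case 1
    then show False using grank_less[OF assms G(2) G(1)] G(3) by simp
  next
    case 2
    then show False using grank_less[OF assms G(1) G(2)] G(3) by simp
  qed
qed

lemma grank_image_pred:
  assumes "bdd_below K" "bdd_above K" "G \<in> gaps K"
  shows "grank K ` gpred K G = {..<grank K G}"
proof (rule card_subset_eq)
  show "finite {..<grank K G}" by simp
  show "grank K ` gpred K G \<subseteq> {..<grank K G}"
    using grank_less[OF assms] by (auto simp: gpred_def)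
  have "inj_on (grank K) (gpred K G)"
    using grank_inj[OF assms(1,2)] by (rule inj_on_subset) (auto simp: gpred_def)
  then have "card (grank K ` gpred K G) = card (gpred K G)" by (rule card_image)
  then show "card (grank K ` gpred K G) = card {..<grank K G}"
    by (metis card_lessThan grank_def)
qed

lemma downclosed_nat:
  fixes I :: "nat set"
  assumes "\<And>n n'. n \<in> I \<Longrightarrow> n' < n \<Longrightarrow> n' \<in> I"
  shows "I = UNIV \<or> (\<exists>N. I = {..<N})"
proof (cases "I = UNIV")
  case False
  then obtain n0 where "n0 \<notin> I" by auto
  define N where "N = (LEAST n. n \<notin> I)"
  have NI: "N \<notin> I" unfolding N_def by (rule LeastI[of _ n0]) fact
  have "I = {..<N}"
  proof
    show "I \<subseteq> {..<N}"
    proof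
      fix n assume "n \<in> I"
      show "n \<in> {..<N}"
      proof (rule ccontr)
        assume "n \<notin> {..<N}"
        then have "N \<le> n" by simp
        then have "N \<in> I" using assms \<open>n \<in> I\<close> by (cases "N = n") auto
        then show False using NI by simp
      qed
    qed
    show "{..<N} \<subseteq> I"
      using not_less_Least unfolding N_def by auto
  qed
  then show ?thesis by blast
qed simp

lemma gap_enum_exists:
  assumes "bdd_below K" "bdd_above K"
  shows "\<exists>e I. gap_enum K e I"
proof -
  define I where "I = grank K ` gaps K"
  define e where "e = inv_into (gaps K) (grank K)"
  have inj: "inj_on (grank K) (gaps K)" by (rule grank_inj[OF assms])
  have bij: "bij_betw e I (gaps K)"
    unfolding e_def I_def by (rule bij_betw_inv_into) (simp add: bij_betw_def inj)
  have dc: "n' \<in> I" if nI: "n \<in> I" and lt: "n' < n" for n n'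
  proof -
    obtain G where G: "G \<in> gaps K" "n = grank K G" using nI unfolding I_def by blast
    then have "n' \<in> grank K ` gpred K G" using grank_image_pred[OF assms G(1)] lt by simp
    then show ?thesis unfolding I_def gpred_def by auto
  qed
  have mono: "glen (e j) \<le> glen (e i)" if "i \<in> I" "j \<in> I" "i \<le> j" for i j
  proof (rule ccontr)
    assume "\<not> glen (e j) \<le> glen (e i)"
    then have pr: "gprec (e j) (e i)" unfolding gprec_def by simp
    have ei: "e i \<in> gaps K" "e j \<in> gaps K" using bij that by (auto simp: bij_betw_def)
    have "grank K (e i) = i" "grank K (e j) = j"
      using that unfolding e_def I_def by (auto simp: f_inv_into_f)
    with grank_less[OF assms ei(1) ei(2) pr] that show False by simp
  qed
  have "I = UNIV \<or> (\<exists>N. I = {..<N})" using downclosed_nat[of I] dc by blast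
  then have "gap_enum K e I"
    unfolding gap_enum_def using bij mono by blast
  then show ?thesis by blast
qed


definition lset :: "real set \<Rightarrow> real \<times> real \<Rightarrow> real set" where
  "lset K G = {Inf K} \<union> {snd G' | G'. G' \<in> gaps K \<and> G' \<noteq> G \<and> glen G \<le> glen G' \<and> snd G' \<le> fst G}"
definition rset :: "real set \<Rightarrow> real \<times> real \<Rightarrow> real set" where
  "rset K G = {Sup K} \<union> {fst G' | G'. G' \<in> gaps K \<and> G' \<noteq> G \<and> glen G \<le> glen G' \<and> snd G \<le> fst G'}"
definition LW :: "real set \<Rightarrow> real \<times> real \<Rightarrow> real" where
  "LW K G = fst G - Max (lset K G)"
definition RW :: "real set \<Rightarrow> real \<times> real \<Rightarrow> real" where
  "RW K G = Min (rset K G) - snd G"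
definition tw :: "real set \<Rightarrow> ereal" where
  "tw K = (INF G\<in>gaps K. ereal (min (LW K G) (RW K G) / glen G))"

lemma lset_finite:
  assumes "bdd_below K" "bdd_above K" "G \<in> gaps K"
  shows "finite (lset K G)"
proof -
  have "{snd G' | G'. G' \<in> gaps K \<and> G' \<noteq> G \<and> glen G \<le> glen G' \<and> snd G' \<le> fst G}
        \<subseteq> snd ` {G' \<in> gaps K. glen G \<le> glen G'}" by blast
  moreover have "finite (snd ` {G' \<in> gaps K. glen G \<le> glen G'})"
    using finite_big_gaps[OF assms(1,2) gap_glen_pos[OF assms(3)]] by simp
  ultimately show ?thesis unfolding lset_def using finite_subset by auto
qed

lemma rset_finite:
  assumes "bdd_below K" "bdd_above K" "G \<in> gaps K"
  shows "finite (rset K G)"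
proof -
  have "{fst G' | G'. G' \<in> gaps K \<and> G' \<noteq> G \<and> glen G \<le> glen G' \<and> snd G \<le> fst G'}
        \<subseteq> fst ` {G' \<in> gaps K. glen G \<le> glen G'}" by blast
  moreover have "finite (fst ` {G' \<in> gaps K. glen G \<le> glen G'})"
    using finite_big_gaps[OF assms(1,2) gap_glen_pos[OF assms(3)]] by simp
  ultimately show ?thesis unfolding rset_def using finite_subset by auto
qed

lemma enum_INF_eq_tw:
  assumes bb: "bdd_below K" "bdd_above K" and ge: "gap_enum K e I"
  shows "(INF n\<in>I. ereal (min (left_bridge_len K e n) (right_bridge_len K e n) / glen (e n))) = tw K"
proof -
  have bij: "bij_betw e I (gaps K)" and mono: "\<And>i j. i \<in> I \<Longrightarrow> j \<in> I \<Longrightarrow> i \<le> j \<Longrightarrow> glen (e j) \<le> glen (e i)"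
    using ge by (auto simp: gap_enum_def)
  have eG: "e n \<in> gaps K" if "n \<in> I" for n using bij that by (auto simp: bij_betw_def)
  have einj: "e i = e j \<Longrightarrow> i \<in> I \<Longrightarrow> j \<in> I \<Longrightarrow> i = j" for i j
    using bij by (auto simp: bij_betw_def inj_on_def)
  have dcl: "j \<in> I" if "n \<in> I" "j < n" for n j
    using ge that by (auto simp: gap_enum_def)
  define le where "le n = {Inf K} \<union> {snd (e j) | j. j < n \<and> snd (e j) \<le> fst (e n)}" for n
  define re where "re n = {Sup K} \<union> {fst (e j) | j. j < n \<and> snd (e n) \<le> fst (e j)}" for n
  have lb: "left_bridge_len K e n = fst (e n) - Max (le n)" for n
    unfolding left_bridge_len_def le_def by simp
  have rb: "right_bridge_len K e n = Min (re n) - snd (e n)" for n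
    unfolding right_bridge_len_def re_def by simp
  have le_fin: "finite (le n)" for n
  proof -
    have "{snd (e j) | j. j < n \<and> snd (e j) \<le> fst (e n)} \<subseteq> (\<lambda>j. snd (e j)) ` {..<n}" by auto
    then show ?thesis unfolding le_def using finite_subset by auto
  qed
  have re_fin: "finite (re n)" for n
  proof -
    have "{fst (e j) | j. j < n \<and> snd (e n) \<le> fst (e j)} \<subseteq> (\<lambda>j. fst (e j)) ` {..<n}" by auto
    then show ?thesis unfolding re_def using finite_subset by auto
  qed
  have le_sub: "le n \<subseteq> lset K (e n)" if "n \<in> I" for n
  proof
    fix v assume "v \<in> le n"
    then consider "v = Inf K" | j where "j < n" "snd (e j) \<le> fst (e n)" "v = snd (e j)"
      unfolding le_def by auto
    then show "v \<in> lset K (e n)"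
    proof cases
      case 1 then show ?thesis by (simp add: lset_def)
    next
      case 2
      have jI: "j \<in> I" using dcl that 2 by blast
      have "e j \<noteq> e n" using einj[OF _ jI that] 2 by auto
      moreover have "glen (e n) \<le> glen (e j)" using mono jI that 2 by simp
      ultimately show ?thesis unfolding lset_def using eG[OF jI] 2 by blast
    qed
  qed
  have re_sub: "re n \<subseteq> rset K (e n)" if "n \<in> I" for n
  proof
    fix v assume "v \<in> re n"
    then consider "v = Sup K" | j where "j < n" "snd (e n) \<le> fst (e j)" "v = fst (e j)"
      unfolding re_def by auto
    then show "v \<in> rset K (e n)"
    proof cases
      case 1 then show ?thesis by (simp add: rset_def)
    next
      case 2
      have jI: "j \<in> I" using dcl that 2 by blast
      have "e j \<noteq> e n" using einj[OF _ jI that] 2 by auto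
      moreover have "glen (e n) \<le> glen (e j)" using mono jI that 2 by simp
      ultimately show ?thesis unfolding rset_def using eG[OF jI] 2 by blast
    qed
  qed
  have ratio_ge: "min (LW K (e n)) (RW K (e n)) / glen (e n)
      \<le> min (left_bridge_len K e n) (right_bridge_len K e n) / glen (e n)" if "n \<in> I" for n
  proof -
    have "Max (le n) \<le> Max (lset K (e n))"
      using Max_mono[OF le_sub[OF that] _ lset_finite[OF bb eG[OF that]]] by (simp add: le_def)
    moreover have "Min (rset K (e n)) \<le> Min (re n)"
      using Min_antimono[OF re_sub[OF that] _ rset_finite[OF bb eG[OF that]]] by (simp add: re_def)
    ultimately have "min (LW K (e n)) (RW K (e n)) \<le> min (left_bridge_len K e n) (right_bridge_len K e n)"
      unfolding LW_def RW_def lb rb by linarith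
    then show ?thesis using gap_glen_pos[OF eG[OF that]] by (simp add: divide_right_mono)
  qed
  have ratio_le: "\<exists>j\<in>I. min (left_bridge_len K e j) (right_bridge_len K e j) / glen (e j)
      \<le> min (LW K G) (RW K G) / glen G" if G: "G \<in> gaps K" for G
  proof -
    obtain n where nI: "n \<in> I" and Gn: "G = e n" using bij G by (auto simp: bij_betw_def)
    have gpos: "glen G > 0" using gap_glen_pos G by blast
    show ?thesis
    proof (cases "LW K G \<le> RW K G")
      case True
      have mx: "Max (lset K G) \<in> lset K G" using lset_finite[OF bb G] by (rule Max_in) (simp add: lset_def)
      then consider "Max (lset K G) = Inf K"
        | G' where "G' \<in> gaps K" "G' \<noteq> G" "glen G \<le> glen G'" "snd G' \<le> fst G" "Max (lset K G) = snd G'"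
        unfolding lset_def by blast
      then show ?thesis
      proof cases
        case 1
        then have "Max (lset K G) \<le> Max (le n)" using le_fin by (auto simp: le_def)
        then have "left_bridge_len K e n \<le> LW K G" unfolding lb LW_def Gn by simp
        then have "min (left_bridge_len K e n) (right_bridge_len K e n) / glen (e n) \<le> LW K G / glen G"
          using gpos Gn by (simp add: divide_right_mono)
        then show ?thesis using True nI by auto
      next
        case 2
        obtain j where jI: "j \<in> I" and Gj: "G' = e j" using bij 2(1) by (auto simp: bij_betw_def)
        have "j \<noteq> n" using 2(2) Gj Gn by auto
        show ?thesis
        proof (cases "j < n")
          case True
          then have "Max (lset K G) \<in> le n" using 2 Gj Gn by (auto simp: le_def)
          then have "Max (lset K G) \<le> Max (le n)" using le_fin by simp
          then have "left_bridge_len K e n \<le> LW K G" unfolding lb LW_def Gn by simp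
          then have "min (left_bridge_len K e n) (right_bridge_len K e n) / glen (e n) \<le> LW K G / glen G"
            using gpos Gn by (simp add: divide_right_mono)
          then show ?thesis using \<open>LW K G \<le> RW K G\<close> nI by auto
        next
          case False
          then have nj: "n < j" using \<open>j \<noteq> n\<close> by simp
          then have "glen (e j) \<le> glen (e n)" using mono nI jI by simp
          then have eqlen: "glen (e j) = glen G" using 2(3) Gj Gn by simp
          have "fst G \<in> re j" using nj 2(4) Gj Gn by (auto simp: re_def)
          then have "Min (re j) \<le> fst G" using re_fin by simp
          then have "right_bridge_len K e j \<le> LW K G" unfolding rb LW_def using 2(5) Gj by simp
          then have "min (left_bridge_len K e j) (right_bridge_len K e j) / glen (e j) \<le> LW K G / glen G"
            using gpos eqlen by (simp add: divide_right_mono)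
          then show ?thesis using \<open>LW K G \<le> RW K G\<close> jI by auto
        qed
      qed
    next
      case False
      then have LR: "RW K G \<le> LW K G" by simp
      have mn: "Min (rset K G) \<in> rset K G" using rset_finite[OF bb G] by (rule Min_in) (simp add: rset_def)
      then consider "Min (rset K G) = Sup K"
        | G' where "G' \<in> gaps K" "G' \<noteq> G" "glen G \<le> glen G'" "snd G \<le> fst G'" "Min (rset K G) = fst G'"
        unfolding rset_def by blast
      then show ?thesis
      proof cases
        case 1
        then have "Min (re n) \<le> Min (rset K G)" using re_fin by (auto simp: re_def)
        then have "right_bridge_len K e n \<le> RW K G" unfolding rb RW_def Gn by simp
        then have "min (left_bridge_len K e n) (right_bridge_len K e n) / glen (e n) \<le> RW K G / glen G"
          using gpos Gn by (simp add: divide_right_mono)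
        then show ?thesis using LR nI by auto
      next
        case 2
        obtain j where jI: "j \<in> I" and Gj: "G' = e j" using bij 2(1) by (auto simp: bij_betw_def)
        have "j \<noteq> n" using 2(2) Gj Gn by auto
        show ?thesis
        proof (cases "j < n")
          case True
          then have "Min (rset K G) \<in> re n" using 2 Gj Gn by (auto simp: re_def)
          then have "Min (re n) \<le> Min (rset K G)" using re_fin by simp
          then have "right_bridge_len K e n \<le> RW K G" unfolding rb RW_def Gn by simp
          then have "min (left_bridge_len K e n) (right_bridge_len K e n) / glen (e n) \<le> RW K G / glen G"
            using gpos Gn by (simp add: divide_right_mono)
          then show ?thesis using LR nI by auto
        next
          case False
          then have nj: "n < j" using \<open>j \<noteq> n\<close> by simp
          then have "glen (e j) \<le> glen (e n)" using mono nI jI by simp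
          then have eqlen: "glen (e j) = glen G" using 2(3) Gj Gn by simp
          have "snd G \<in> le j" using nj 2(4) Gj Gn by (auto simp: le_def)
          then have "snd G \<le> Max (le j)" using le_fin by simp
          then have "left_bridge_len K e j \<le> RW K G" unfolding lb RW_def using 2(5) Gj by simp
          then have "min (left_bridge_len K e j) (right_bridge_len K e j) / glen (e j) \<le> RW K G / glen G"
            using gpos eqlen by (simp add: divide_right_mono)
          then show ?thesis using LR jI by auto
        qed
      qed
    qed
  qed
  show ?thesis
  proof (rule antisym)
    show "(INF n\<in>I. ereal (min (left_bridge_len K e n) (right_bridge_len K e n) / glen (e n))) \<le> tw K"
      unfolding tw_def
    proof (rule INF_greatest)
      fix G assume "G \<in> gaps K"
      then obtain j where "j \<in> I" "min (left_bridge_len K e j) (right_bridge_len K e j) / glen (e j)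
        \<le> min (LW K G) (RW K G) / glen G" using ratio_le by blast
      then show "(INF n\<in>I. ereal (min (left_bridge_len K e n) (right_bridge_len K e n) / glen (e n)))
          \<le> ereal (min (LW K G) (RW K G) / glen G)"
        by (meson INF_lower2 ereal_less_eq(3))
    qed
    show "tw K \<le> (INF n\<in>I. ereal (min (left_bridge_len K e n) (right_bridge_len K e n) / glen (e n)))"
      unfolding tw_def
    proof (rule INF_greatest)
      fix n assume "n \<in> I"
      then show "(INF G\<in>gaps K. ereal (min (LW K G) (RW K G) / glen G))
          \<le> ereal (min (left_bridge_len K e n) (right_bridge_len K e n) / glen (e n))"
        using ratio_ge eG by (meson INF_lower2 ereal_less_eq(3))
    qed
  qed
qed

lemma thickness_eq_tw:
  assumes "bdd_below K" "bdd_above K"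
  shows "thickness K = tw K"
proof -
  obtain e I where "gap_enum K e I" using gap_enum_exists[OF assms] by blast
  then have ex: "\<exists>t e I. gap_enum K e I \<and>
      t = (INF n\<in>I. ereal (min (left_bridge_len K e n) (right_bridge_len K e n) / glen (e n)))" by blast
  show ?thesis unfolding thickness_def
    using someI_ex[OF ex] enum_INF_eq_tw[OF assms] by metis
qed


lemma gaps_restrict:
  assumes "a \<in> K" "b \<in> K"
  shows "gaps (K \<inter> {a..b}) = {G \<in> gaps K. a \<le> fst G \<and> snd G \<le> b}"
proof (intro set_eqI iffI)
  fix G assume G: "G \<in> gaps (K \<inter> {a..b})"
  obtain u v where uv: "G = (u,v)" by (cases G)
  have "u \<in> K" "v \<in> K" "u < v" "a \<le> u" "v \<le> b" "{u<..<v} \<inter> (K \<inter> {a..b}) = {}"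
    using G uv by (auto simp: gaps_def)
  then have "{u<..<v} \<inter> K = {}" by auto
  then show "G \<in> {G \<in> gaps K. a \<le> fst G \<and> snd G \<le> b}"
    using \<open>u \<in> K\<close> \<open>v \<in> K\<close> \<open>u < v\<close> \<open>a \<le> u\<close> \<open>v \<le> b\<close> uv by (auto simp: gaps_def)
next
  fix G assume G: "G \<in> {G \<in> gaps K. a \<le> fst G \<and> snd G \<le> b}"
  obtain u v where uv: "G = (u,v)" by (cases G)
  have "u \<in> K" "v \<in> K" "u < v" "a \<le> u" "v \<le> b" "{u<..<v} \<inter> K = {}"
    using G uv by (auto simp: gaps_def)
  then show "G \<in> gaps (K \<inter> {a..b})" using uv by (auto simp: gaps_def)
qed

lemma tw_restrict:
  assumes bb: "bdd_below K" "bdd_above K" and ab: "a \<in> K" "b \<in> K" "a \<le> b"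
    and Ha: "a = Inf K \<or> (\<exists>a'. (a',a) \<in> gaps K \<and> (\<forall>G\<in>gaps K. a \<le> fst G \<and> snd G \<le> b \<longrightarrow> glen G \<le> a - a'))"
    and Hb: "b = Sup K \<or> (\<exists>b'. (b,b') \<in> gaps K \<and> (\<forall>G\<in>gaps K. a \<le> fst G \<and> snd G \<le> b \<longrightarrow> glen G \<le> b' - b))"
  shows "tw K \<le> tw (K \<inter> {a..b})"
proof -
  define D where "D = K \<inter> {a..b}"
  have gD: "gaps D = {G \<in> gaps K. a \<le> fst G \<and> snd G \<le> b}" unfolding D_def by (rule gaps_restrict[OF ab(1,2)])
  have bbD: "bdd_below D" "bdd_above D" unfolding D_def using bb by (auto intro: bdd_below_mono bdd_above_mono)
  have infD: "Inf D = a" unfolding D_def using ab by (intro cInf_eq_minimum) auto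
  have supD: "Sup D = b" unfolding D_def using ab by (intro cSup_eq_maximum) auto
  have infK: "Inf K \<le> a" using bb ab by (simp add: cInf_lower)
  have supK: "b \<le> Sup K" using bb ab by (simp add: cSup_upper)
  have eqL: "LW D G = LW K G" if G: "G \<in> gaps D" for G
  proof -
    have GK: "G \<in> gaps K" "a \<le> fst G" "snd G \<le> b" using G gD by auto
    have fs: "fst G \<le> snd G" using GK by (auto simp: gaps_def)
    have aL: "a \<in> lset K G"
      using Ha
    proof
      assume "a = Inf K" then show ?thesis by (simp add: lset_def)
    next
      assume "\<exists>a'. (a',a) \<in> gaps K \<and> (\<forall>G\<in>gaps K. a \<le> fst G \<and> snd G \<le> b \<longrightarrow> glen G \<le> a - a')"
      then obtain a' where a': "(a',a) \<in> gaps K" "\<forall>G\<in>gaps K. a \<le> fst G \<and> snd G \<le> b \<longrightarrow> glen G \<le> a - a'" by blast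
      have "a' < a" using a' by (auto simp: gaps_def)
      then have "(a',a) \<noteq> G" using GK by auto
      moreover have "glen G \<le> glen (a',a)" using a' GK by (simp add: glen_def)
      ultimately show ?thesis unfolding lset_def using a'(1) GK by force
    qed
    have sub: "lset D G \<subseteq> lset K G"
      using aL gD unfolding lset_def infD by blast
    have finD: "finite (lset D G)" by (rule lset_finite[OF bbD G])
    have finK: "finite (lset K G)" by (rule lset_finite[OF bb GK(1)])
    have aLD: "a \<in> lset D G" unfolding lset_def infD by simp
    have bound: "x \<le> Max (lset D G)" if x: "x \<in> lset K G" for x
    proof -
      have aM: "a \<le> Max (lset D G)" using aLD finD by simp
      from x consider "x = Inf K"
        | G' where "G' \<in> gaps K" "G' \<noteq> G" "glen G \<le> glen G'" "snd G' \<le> fst G" "x = snd G'"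
        unfolding lset_def by blast
      then show ?thesis
      proof cases
        case 1 then show ?thesis using infK aM by simp
      next
        case 2
        show ?thesis
        proof (cases "a \<le> fst G'")
          case True
          then have "G' \<in> gaps D" using gD 2 GK fs by auto
          then have "x \<in> lset D G" unfolding lset_def using 2 by blast
          then show ?thesis using finD by simp
        next
          case False
          have "snd G' \<le> a"
          proof (rule ccontr)
            assume "\<not> snd G' \<le> a"
            then have "a \<in> {fst G'<..<snd G'} \<inter> K" using False ab by auto
            then show False using 2(1) by (auto simp: gaps_def)
          qed
          then show ?thesis using 2 aM by simp
        qed
      qed
    qed
    have "Max (lset K G) \<le> Max (lset D G)" using bound Max_in[OF finK] by (auto simp: lset_def)
    moreover have "Max (lset D G) \<le> Max (lset K G)" using Max_mono[OF sub _ finK] aLD by auto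
    ultimately show ?thesis unfolding LW_def by simp
  qed
  have eqR: "RW D G = RW K G" if G: "G \<in> gaps D" for G
  proof -
    have GK: "G \<in> gaps K" "a \<le> fst G" "snd G \<le> b" using G gD by auto
    have fs: "fst G \<le> snd G" using GK by (auto simp: gaps_def)
    have bR: "b \<in> rset K G"
      using Hb
    proof
      assume "b = Sup K" then show ?thesis by (simp add: rset_def)
    next
      assume "\<exists>b'. (b,b') \<in> gaps K \<and> (\<forall>G\<in>gaps K. a \<le> fst G \<and> snd G \<le> b \<longrightarrow> glen G \<le> b' - b)"
      then obtain b' where b': "(b,b') \<in> gaps K" "\<forall>G\<in>gaps K. a \<le> fst G \<and> snd G \<le> b \<longrightarrow> glen G \<le> b' - b" by blast
      have "b < b'" using b' by (auto simp: gaps_def)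
      then have "(b,b') \<noteq> G" using GK by auto
      moreover have "glen G \<le> glen (b,b')" using b' GK by (simp add: glen_def)
      ultimately show ?thesis unfolding rset_def using b'(1) GK by force
    qed
    have sub: "rset D G \<subseteq> rset K G"
      using bR gD unfolding rset_def supD by blast
    have finD: "finite (rset D G)" by (rule rset_finite[OF bbD G])
    have finK: "finite (rset K G)" by (rule rset_finite[OF bb GK(1)])
    have bRD: "b \<in> rset D G" unfolding rset_def supD by simp
    have bound: "Min (rset D G) \<le> x" if x: "x \<in> rset K G" for x
    proof -
      have bM: "Min (rset D G) \<le> b" using bRD finD by simp
      from x consider "x = Sup K"
        | G' where "G' \<in> gaps K" "G' \<noteq> G" "glen G \<le> glen G'" "snd G \<le> fst G'" "x = fst G'"
        unfolding rset_def by blast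
      then show ?thesis
      proof cases
        case 1 then show ?thesis using supK bM by simp
      next
        case 2
        show ?thesis
        proof (cases "snd G' \<le> b")
          case True
          then have "G' \<in> gaps D" using gD 2 GK fs by auto
          then have "x \<in> rset D G" unfolding rset_def using 2 by blast
          then show ?thesis using finD by simp
        next
          case False
          have "b \<le> fst G'"
          proof (rule ccontr)
            assume "\<not> b \<le> fst G'"
            then have "b \<in> {fst G'<..<snd G'} \<inter> K" using False ab by auto
            then show False using 2(1) by (auto simp: gaps_def)
          qed
          then show ?thesis using 2 bM by simp
        qed
      qed
    qed
    have "Min (rset D G) \<le> Min (rset K G)" using bound Min_in[OF finK] by (auto simp: rset_def)
    moreover have "Min (rset K G) \<le> Min (rset D G)" using Min_antimono[OF sub _ finK] bRD by auto
    ultimately show ?thesis unfolding RW_def by simp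
  qed
  have "tw K \<le> (INF G\<in>gaps D. ereal (min (LW K G) (RW K G) / glen G))"
    unfolding tw_def by (rule INF_superset_mono) (use gD in auto)
  also have "\<dots> = tw D" unfolding tw_def using eqL eqR by simp
  finally show ?thesis unfolding D_def .
qed


lemma tw_affine:
  fixes c d :: real
  assumes c: "c > 0" and a: "a \<in> K" "\<forall>x\<in>K. a \<le> x" and b: "b \<in> K" "\<forall>x\<in>K. x \<le> b"
  shows "tw ((\<lambda>x. c * x + d) ` K) = tw K"
proof -
  define f where "f x = c * x + d" for x
  define F where "F G = (f (fst G), f (snd G))" for G
  have fmono: "f u < f v \<longleftrightarrow> u < v" "f u \<le> f v \<longleftrightarrow> u \<le> v" "f u = f v \<longleftrightarrow> u = v" for u v
    using c by (auto simp: f_def)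
  have Finj: "F G = F G' \<longleftrightarrow> G = G'" for G G'
    using fmono(3) by (cases G, cases G') (auto simp: F_def)
  have glF: "glen (F G) = c * glen G" for G by (simp add: F_def glen_def f_def algebra_simps)
  have bbK: "bdd_below K" "bdd_above K" using a b by (auto simp: bdd_below_def bdd_above_def)
  have infK: "Inf K = a" using a by (intro cInf_eq_minimum) auto
  have supK: "Sup K = b" using b by (intro cSup_eq_maximum) auto
  have inff: "Inf (f ` K) = f a" using a fmono by (intro cInf_eq_minimum) auto
  have supf: "Sup (f ` K) = f b" using b fmono by (intro cSup_eq_maximum) auto
  have gF: "gaps (f ` K) = F ` gaps K"
  proof (intro set_eqI iffI)
    fix H assume H: "H \<in> gaps (f ` K)"
    obtain p r where pr: "H = (p, r)" by (cases H)
    then have "p \<in> f ` K" "r \<in> f ` K" "p < r" "{p<..<r} \<inter> f ` K = {}" using H by (auto simp: gaps_def)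
    then obtain u v where uv: "u \<in> K" "v \<in> K" "p = f u" "r = f v" by auto
    have "u < v" using uv \<open>p < r\<close> fmono by simp
    have "{u<..<v} \<inter> K = {}"
    proof (rule ccontr)
      assume "{u<..<v} \<inter> K \<noteq> {}"
      then obtain w where "w \<in> K" "u < w" "w < v" by auto
      then have "f w \<in> {p<..<r} \<inter> f ` K" using uv fmono by auto
      then show False using \<open>{p<..<r} \<inter> f ` K = {}\<close> by blast
    qed
    then have "(u,v) \<in> gaps K" using uv \<open>u < v\<close> by (simp add: gaps_def)
    moreover have "H = F (u,v)" using pr uv by (simp add: F_def)
    ultimately show "H \<in> F ` gaps K" by blast
  next
    fix H assume "H \<in> F ` gaps K"
    then obtain u v where uv: "(u,v) \<in> gaps K" "H = (f u, f v)" by (auto simp: F_def)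
    have "u \<in> K" "v \<in> K" "u < v" "{u<..<v} \<inter> K = {}" using uv by (auto simp: gaps_def)
    have "{f u<..<f v} \<inter> f ` K = {}"
    proof (rule ccontr)
      assume "{f u<..<f v} \<inter> f ` K \<noteq> {}"
      then obtain w where "w \<in> K" "f u < f w" "f w < f v" by auto
      then have "w \<in> {u<..<v} \<inter> K" using fmono by auto
      then show False using \<open>{u<..<v} \<inter> K = {}\<close> by blast
    qed
    then show "H \<in> gaps (f ` K)" using uv \<open>u \<in> K\<close> \<open>v \<in> K\<close> \<open>u < v\<close> fmono by (auto simp: gaps_def)
  qed
  have monof: "mono f" using fmono by (auto simp: mono_def)
  have lsetF: "lset (f ` K) (F G) = f ` lset K G" if G: "G \<in> gaps K" for G
  proof -
    have key: "(F G' \<noteq> F G \<and> glen (F G) \<le> glen (F G') \<and> snd (F G') \<le> fst (F G)) \<longleftrightarrow>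
        (G' \<noteq> G \<and> glen G \<le> glen G' \<and> snd G' \<le> fst G)" for G'
      using Finj[of G' G] glF[of G] glF[of G'] c fmono(2)[of "snd G'" "fst G"] by (simp add: F_def)
    have "{snd G'' | G''. G'' \<in> F ` gaps K \<and> G'' \<noteq> F G \<and> glen (F G) \<le> glen G'' \<and> snd G'' \<le> fst (F G)}
        = {snd (F G') | G'. G' \<in> gaps K \<and> F G' \<noteq> F G \<and> glen (F G) \<le> glen (F G') \<and> snd (F G') \<le> fst (F G)}"
      by blast
    also have "\<dots> = {f (snd G') | G'. G' \<in> gaps K \<and> G' \<noteq> G \<and> glen G \<le> glen G' \<and> snd G' \<le> fst G}"
      unfolding key by (simp add: F_def)
    also have "\<dots> = f ` {snd G' | G'. G' \<in> gaps K \<and> G' \<noteq> G \<and> glen G \<le> glen G' \<and> snd G' \<le> fst G}"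
      by blast
    finally show ?thesis unfolding lset_def inff infK gF by simp
  qed
  have rsetF: "rset (f ` K) (F G) = f ` rset K G" if G: "G \<in> gaps K" for G
  proof -
    have key: "(F G' \<noteq> F G \<and> glen (F G) \<le> glen (F G') \<and> snd (F G) \<le> fst (F G')) \<longleftrightarrow>
        (G' \<noteq> G \<and> glen G \<le> glen G' \<and> snd G \<le> fst G')" for G'
      using Finj[of G' G] glF[of G] glF[of G'] c fmono(2)[of "snd G" "fst G'"] by (simp add: F_def)
    have "{fst G'' | G''. G'' \<in> F ` gaps K \<and> G'' \<noteq> F G \<and> glen (F G) \<le> glen G'' \<and> snd (F G) \<le> fst G''}
        = {fst (F G') | G'. G' \<in> gaps K \<and> F G' \<noteq> F G \<and> glen (F G) \<le> glen (F G') \<and> snd (F G) \<le> fst (F G')}"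
      by blast
    also have "\<dots> = {f (fst G') | G'. G' \<in> gaps K \<and> G' \<noteq> G \<and> glen G \<le> glen G' \<and> snd G \<le> fst G'}"
      unfolding key by (simp add: F_def)
    also have "\<dots> = f ` {fst G' | G'. G' \<in> gaps K \<and> G' \<noteq> G \<and> glen G \<le> glen G' \<and> snd G \<le> fst G'}"
      by blast
    finally show ?thesis unfolding rset_def supf supK gF by simp
  qed
  have ratio: "min (LW (f ` K) (F G)) (RW (f ` K) (F G)) / glen (F G) = min (LW K G) (RW K G) / glen G"
    if G: "G \<in> gaps K" for G
  proof -
    have "Max (lset (f ` K) (F G)) = f (Max (lset K G))"
      unfolding lsetF[OF G] using mono_Max_commute[OF monof lset_finite[OF bbK G]] by (simp add: lset_def)
    then have L: "LW (f ` K) (F G) = c * LW K G" unfolding LW_def by (simp add: F_def f_def algebra_simps)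
    have "Min (rset (f ` K) (F G)) = f (Min (rset K G))"
      unfolding rsetF[OF G] using mono_Min_commute[OF monof rset_finite[OF bbK G]] by (simp add: rset_def)
    then have R: "RW (f ` K) (F G) = c * RW K G" unfolding RW_def by (simp add: F_def f_def algebra_simps)
    have "min (c * LW K G) (c * RW K G) = c * min (LW K G) (RW K G)" using c by (simp add: min_mult_distrib_left)
    then show ?thesis unfolding L R glF using c by simp
  qed
  have "tw (f ` K) = (INF G\<in>gaps K. ereal (min (LW (f ` K) (F G)) (RW (f ` K) (F G)) / glen (F G)))"
    unfolding tw_def gF by (simp add: image_comp o_def)
  also have "\<dots> = tw K" unfolding tw_def using ratio by simp
  finally show ?thesis unfolding f_def by simp
qed


definition binary :: "(nat \<Rightarrow> nat) \<Rightarrow> bool" where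
  "binary e \<longleftrightarrow> (\<forall>n. e n \<in> {0,1})"
definition scons :: "nat \<Rightarrow> (nat \<Rightarrow> nat) \<Rightarrow> nat \<Rightarrow> nat" where
  "scons a e = (\<lambda>n. case n of 0 \<Rightarrow> a | Suc m \<Rightarrow> e m)"
definition pre :: "nat \<Rightarrow> nat \<Rightarrow> (nat \<Rightarrow> nat) \<Rightarrow> nat \<Rightarrow> nat" where
  "pre a r e = (\<lambda>n. if n < r then a else e (n - r))"
definition cmp :: "(nat \<Rightarrow> nat) \<Rightarrow> nat \<Rightarrow> nat" where
  "cmp e = (\<lambda>n. 1 - e n)"
definition shift :: "nat \<Rightarrow> (nat \<Rightarrow> nat) \<Rightarrow> nat \<Rightarrow> nat" where
  "shift r e = (\<lambda>n. e (n + r))"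

definition inS :: "nat \<Rightarrow> (nat \<Rightarrow> nat) \<Rightarrow> bool" where
  "inS s e \<longleftrightarrow> binary e \<and> (\<forall>n. \<not> (e n = 0 \<and> (\<forall>i\<le>s. e (Suc (n + i)) = 1)))
      \<and> (\<forall>n. \<not> (e n = 1 \<and> (\<forall>i\<le>s. e (Suc (n + i)) = 0)))"

lemma occurs_cons_rep:
  "occurs_in (a # replicate j b) e \<longleftrightarrow> (\<exists>n. e n = a \<and> (\<forall>i<j. e (Suc (n + i)) = b))"
proof -
  have "(\<forall>i<length (a # replicate j b). e (n + i) = (a # replicate j b) ! i) \<longleftrightarrow>
        (e n = a \<and> (\<forall>i<j. e (Suc (n + i)) = b))" for n
  proof
    assume H: "\<forall>i<length (a # replicate j b). e (n + i) = (a # replicate j b) ! i"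
    have "e n = a" using H[rule_format, of 0] by simp
    moreover have "e (Suc (n + i)) = b" if "i < j" for i
      using H[rule_format, of "Suc i"] that by simp
    ultimately show "e n = a \<and> (\<forall>i<j. e (Suc (n + i)) = b)" by blast
  next
    assume H: "e n = a \<and> (\<forall>i<j. e (Suc (n + i)) = b)"
    show "\<forall>i<length (a # replicate j b). e (n + i) = (a # replicate j b) ! i"
    proof (intro allI impI)
      fix i assume "i < length (a # replicate j b)"
      then show "e (n + i) = (a # replicate j b) ! i"
        using H by (cases i) auto
    qed
  qed
  then show ?thesis unfolding occurs_in_def by simp
qed

lemma S_set_iff: "e \<in> S_set (Suc s) \<longleftrightarrow> inS s e"
  unfolding S_set_def inS_def avoids_def occurs_cons_rep binary_def
  by (simp add: less_Suc_eq_le)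

lemma inS_binary: "inS s e \<Longrightarrow> binary e" by (simp add: inS_def)

lemma binary_le1: "binary e \<Longrightarrow> e n \<le> 1"
  unfolding binary_def by (metis empty_iff insert_iff le_numeral_extra(4) zero_le)

lemma all_nat_split: "(\<forall>n. P n) \<longleftrightarrow> P 0 \<and> (\<forall>m. P (Suc m))"
  by (metis not0_implies_Suc)

lemma binary_scons: "binary (scons a e) \<longleftrightarrow> a \<in> {0,1} \<and> binary e"
  unfolding binary_def scons_def by (subst all_nat_split) simp

lemma inS_scons:
  assumes "a \<in> {0,1}"
  shows "inS s (scons a e) \<longleftrightarrow> inS s e \<and> \<not> (\<forall>i\<le>s. e i = 1 - a)"
proof -
  have A: "(\<forall>n. \<not> (scons a e n = 0 \<and> (\<forall>i\<le>s. scons a e (Suc (n + i)) = 1))) \<longleftrightarrow>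
     \<not> (a = 0 \<and> (\<forall>i\<le>s. e i = 1)) \<and> (\<forall>n. \<not> (e n = 0 \<and> (\<forall>i\<le>s. e (Suc (n + i)) = 1)))"
    by (subst all_nat_split) (simp add: scons_def)
  have B: "(\<forall>n. \<not> (scons a e n = 1 \<and> (\<forall>i\<le>s. scons a e (Suc (n + i)) = 0))) \<longleftrightarrow>
     \<not> (a = 1 \<and> (\<forall>i\<le>s. e i = 0)) \<and> (\<forall>n. \<not> (e n = 1 \<and> (\<forall>i\<le>s. e (Suc (n + i)) = 0)))"
    by (subst all_nat_split) (simp add: scons_def)
  show ?thesis unfolding inS_def A B binary_scons using assms by auto
qed

lemma inS_shift:
  assumes "inS s e" shows "inS s (shift r e)"
proof -
  have eq: "shift r e (Suc (n + i)) = e (Suc (n + r + i))" "shift r e n = e (n + r)" for n i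
    by (simp_all add: shift_def add_ac)
  have A: "\<forall>n. e n \<in> {0,1}" and
    B: "\<forall>n. \<not> (e n = 0 \<and> (\<forall>i\<le>s. e (Suc (n + i)) = 1))" and
    C: "\<forall>n. \<not> (e n = 1 \<and> (\<forall>i\<le>s. e (Suc (n + i)) = 0))"
    using assms unfolding inS_def binary_def by auto
  have "\<forall>n. \<not> (e (n + r) = 0 \<and> (\<forall>i\<le>s. e (Suc (n + r + i)) = 1))"
    using B by (intro allI, erule_tac x="n + r" in allE) simp
  moreover have "\<forall>n. \<not> (e (n + r) = 1 \<and> (\<forall>i\<le>s. e (Suc (n + r + i)) = 0))"
    using C by (intro allI, erule_tac x="n + r" in allE) simp
  moreover have "\<forall>n. e (n + r) \<in> {0,1}" using A by simp
  ultimately show ?thesis unfolding inS_def binary_def eq by (simp add: add_ac)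
qed

lemma inS_cmp: "inS s e \<Longrightarrow> inS s (cmp e)"
proof -
  assume H: "inS s e"
  have b: "\<forall>n. e n \<in> {0,1}" using H by (simp add: inS_def binary_def)
  have c: "cmp e n = 0 \<longleftrightarrow> e n = 1" "cmp e n = 1 \<longleftrightarrow> e n = 0" for n
    using b[rule_format, of n] by (auto simp: cmp_def)
  show ?thesis using H b unfolding inS_def binary_def c by (auto simp: cmp_def)
qed

lemma cmp_cmp:
  assumes "binary e" shows "cmp (cmp e) = e"
proof
  fix n
  have "e n \<in> {0,1}" using assms by (simp add: binary_def)
  then show "cmp (cmp e) n = e n" by (auto simp: cmp_def)
qed

lemma binary_cmp: "binary e \<Longrightarrow> binary (cmp e)"
  unfolding binary_def cmp_def by auto

lemma pre_Suc: "pre a (Suc r) e = scons a (pre a r e)"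
  unfolding pre_def scons_def by (rule ext) (auto split: nat.split)

lemma pre_0: "pre a 0 e = e" unfolding pre_def by simp

lemma binary_pre: "a \<in> {0,1} \<Longrightarrow> binary e \<Longrightarrow> binary (pre a r e)"
  unfolding binary_def pre_def by auto


context
  fixes q :: real
  assumes q1: "1 < q"
begin

lemma geo_sum: "(\<lambda>j. 1 / q ^ Suc j) sums (1 / (q - 1))"
proof -
  have "norm (1 / q) < 1" using q1 by simp
  then have "(\<lambda>j. (1/q) ^ j) sums (1 / (1 - 1/q))" by (rule geometric_sums)
  then have "(\<lambda>j. (1/q) * (1/q) ^ j) sums ((1/q) * (1 / (1 - 1/q)))" by (rule sums_mult)
  moreover have "(1/q) * (1 / (1 - 1/q)) = 1 / (q - 1)" using q1 by (simp add: field_simps)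
  moreover have "(\<lambda>j. (1/q) * (1/q) ^ j) = (\<lambda>j. 1 / q ^ Suc j)" by (simp add: power_one_over)
  ultimately show ?thesis by simp
qed

lemma pi_summable:
  assumes "\<And>n. e n \<le> 1"
  shows "summable (\<lambda>j. real (e j) / q ^ Suc j)"
proof (rule summable_comparison_test')
  show "summable (\<lambda>j. 1 / q ^ Suc j)" using geo_sum by (rule sums_summable)
  fix n
  have "real (e n) \<le> 1" using assms[of n] by simp
  then show "norm (real (e n) / q ^ Suc n) \<le> 1 / q ^ Suc n"
    using q1 by (simp add: divide_right_mono)
qed

lemma pi_sums:
  assumes "binary e"
  shows "(\<lambda>j. real (e j) / q ^ Suc j) sums pi_q q e"
  unfolding pi_q_def using pi_summable binary_le1[OF assms] by (simp add: summable_sums)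

lemma pi_scons:
  assumes "binary e" "a \<le> 1"
  shows "pi_q q (scons a e) = (real a + pi_q q e) / q"
proof -
  have b: "\<And>n. scons a e n \<le> 1" using assms binary_le1 by (simp add: scons_def split: nat.split)
  define f where "f j = real (scons a e j) / q ^ Suc j" for j
  have "summable f" unfolding f_def by (rule pi_summable[OF b])
  then have "f sums (pi_q q (scons a e))" unfolding pi_q_def f_def[symmetric] by (rule summable_sums)
  then have "(\<lambda>n. f (Suc n)) sums (pi_q q (scons a e) - f 0)"
    by (subst sums_Suc_iff) simp
  then have "(\<lambda>n. real (scons a e (Suc n)) / q ^ Suc (Suc n)) sums
      (pi_q q (scons a e) - real (scons a e 0) / q ^ Suc 0)"
    unfolding f_def .
  moreover have "(\<lambda>n. real (scons a e (Suc n)) / q ^ Suc (Suc n)) = (\<lambda>n. (real (e n) / q ^ Suc n) / q)"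
    by (simp add: scons_def field_simps)
  ultimately have "(\<lambda>n. (real (e n) / q ^ Suc n) / q) sums (pi_q q (scons a e) - real a / q)"
    by (simp add: scons_def)
  moreover have "(\<lambda>n. (real (e n) / q ^ Suc n) / q) sums (pi_q q e / q)"
    using pi_sums[OF assms(1)] by (rule sums_divide)
  ultimately have "pi_q q (scons a e) - real a / q = pi_q q e / q" using sums_unique2 by blast
  then show ?thesis by (simp add: add_divide_distrib)
qed

definition cc :: "nat \<Rightarrow> real" where
  "cc r = (1 - 1 / q ^ r) / (q - 1)"

lemma pi_pre:
  assumes "binary e" "a \<le> 1"
  shows "pi_q q (pre a r e) = real a * cc r + pi_q q e / q ^ r"
proof (induction r)
  case 0
  then show ?case by (simp add: pre_0 cc_def)
next
  case (Suc r)
  have bp: "binary (pre a r e)" using assms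
  proof -
    have "a \<in> {0,1}" using assms(2) by auto
    then show ?thesis using binary_pre assms(1) by blast
  qed
  have "pi_q q (pre a (Suc r) e) = (real a + pi_q q (pre a r e)) / q"
    unfolding pre_Suc by (rule pi_scons[OF bp assms(2)])
  also have "\<dots> = real a * cc (Suc r) + pi_q q e / q ^ Suc r"
    unfolding Suc using q1 by (simp add: cc_def field_simps)
  finally show ?case .
qed

lemma pi_cmp:
  assumes "binary e"
  shows "pi_q q (cmp e) = 1 / (q - 1) - pi_q q e"
proof -
  have eq: "real (cmp e j) / q ^ Suc j = 1 / q ^ Suc j - real (e j) / q ^ Suc j" for j
  proof -
    have "e j \<in> {0,1}" using assms by (simp add: binary_def)
    then show ?thesis by (auto simp: cmp_def)
  qed
  have "(\<lambda>j. 1 / q ^ Suc j - real (e j) / q ^ Suc j) sums (1 / (q - 1) - pi_q q e)"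
    by (rule sums_diff[OF geo_sum pi_sums[OF assms]])
  then have "(\<lambda>j. real (cmp e j) / q ^ Suc j) sums (1 / (q - 1) - pi_q q e)" unfolding eq .
  then show ?thesis unfolding pi_q_def by (simp add: sums_iff)
qed

lemma pi_nonneg:
  assumes "binary e" shows "0 \<le> pi_q q e"
  unfolding pi_q_def using pi_summable binary_le1[OF assms] q1
  by (intro suminf_nonneg) auto

lemma pi_le:
  assumes "binary e" shows "pi_q q e \<le> 1 / (q - 1)"
  using pi_cmp[OF assms] pi_nonneg[OF binary_cmp[OF assms]] by simp

lemma pi_ones: "pi_q q (\<lambda>_. 1) = 1 / (q - 1)"
  using geo_sum unfolding pi_q_def by (simp add: sums_iff)

lemma pi_zeros: "pi_q q (\<lambda>_. 0) = 0"
  unfolding pi_q_def by simp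

end


lemma cmp_scons: "cmp (scons a e) = scons (1 - a) (cmp e)"
  unfolding cmp_def scons_def by (rule ext) (simp split: nat.split)

lemma binary_vals: "binary e \<Longrightarrow> e n = 0 \<or> e n = 1"
  unfolding binary_def by auto

context
  fixes s :: nat
  assumes s1: "1 \<le> s"
begin

definition Fr1 :: "(nat \<Rightarrow> nat) set" where
  "Fr1 = {e. inS s e \<and> e 0 = 1 \<and> inS s (scons 0 e)}"
definition Fr0 :: "(nat \<Rightarrow> nat) set" where
  "Fr0 = {e. inS s e \<and> e 0 = 0 \<and> inS s (scons 1 e)}"

lemma cmp_Fr1:
  assumes "e \<in> Fr1" shows "cmp e \<in> Fr0"
proof -
  have e: "inS s e" "e 0 = 1" "inS s (scons 0 e)" using assms by (auto simp: Fr1_def)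
  have "scons 1 (cmp e) = cmp (scons 0 e)" using cmp_scons[of 0 e] by simp
  then have "inS s (scons 1 (cmp e))" using inS_cmp[OF e(3)] by simp
  moreover have "cmp e 0 = 0" using e(2) by (simp add: cmp_def)
  ultimately show ?thesis using inS_cmp[OF e(1)] by (simp add: Fr0_def)
qed

lemma cmp_Fr0:
  assumes "e \<in> Fr0" shows "cmp e \<in> Fr1"
proof -
  have e: "inS s e" "e 0 = 0" "inS s (scons 1 e)" using assms by (auto simp: Fr0_def)
  have "scons 0 (cmp e) = cmp (scons 1 e)" using cmp_scons[of 1 e] by simp
  then have "inS s (scons 0 (cmp e))" using inS_cmp[OF e(3)] by simp
  moreover have "cmp e 0 = 1" using e(2) by (simp add: cmp_def)
  ultimately show ?thesis using inS_cmp[OF e(1)] by (simp add: Fr1_def)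
qed

lemma pre1_inS:
  assumes "\<rho> \<in> Fr0"
  shows "inS s (pre 1 r \<rho>)"
proof (induction r)
  case 0 then show ?case using assms by (simp add: pre_0 Fr0_def)
next
  case (Suc r)
  have "\<not> (\<forall>i\<le>s. pre 1 r \<rho> i = 0)"
  proof (cases r)
    case 0
    have "inS s (scons 1 \<rho>)" using assms by (simp add: Fr0_def)
    then show ?thesis using inS_scons[of 1 s \<rho>] 0 by (simp add: pre_0)
  next
    case (Suc r')
    then have "pre 1 r \<rho> 0 = 1" by (simp add: pre_def)
    then show ?thesis by force
  qed
  then show ?case unfolding pre_Suc using inS_scons[of 1 s] Suc by simp
qed

lemma pre1_Fr1:
  assumes "\<rho> \<in> Fr0" "1 \<le> r" "r \<le> s"
  shows "pre 1 r \<rho> \<in> Fr1"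
proof -
  have "pre 1 r \<rho> r = 0" using assms by (simp add: pre_def Fr0_def)
  then have "\<not> (\<forall>i\<le>s. pre 1 r \<rho> i = 1)" using assms(3) by force
  then have "inS s (scons 0 (pre 1 r \<rho>))" using inS_scons[of 0 s] pre1_inS[OF assms(1)] by simp
  moreover have "pre 1 r \<rho> 0 = 1" using assms by (simp add: pre_def)
  ultimately show ?thesis using pre1_inS[OF assms(1)] by (simp add: Fr1_def)
qed

lemma pre0_inS:
  assumes "\<rho> \<in> Fr1"
  shows "inS s (pre 0 r \<rho>)"
proof (induction r)
  case 0 then show ?case using assms by (simp add: pre_0 Fr1_def)
next
  case (Suc r)
  have "\<not> (\<forall>i\<le>s. pre 0 r \<rho> i = 1)"
  proof (cases r)
    case 0
    have "inS s (scons 0 \<rho>)" using assms by (simp add: Fr1_def)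
    then show ?thesis using inS_scons[of 0 s \<rho>] 0 by (simp add: pre_0)
  next
    case (Suc r')
    then have "pre 0 r \<rho> 0 = 0" by (simp add: pre_def)
    then show ?thesis by force
  qed
  then show ?case unfolding pre_Suc using inS_scons[of 0 s] Suc by simp
qed

lemma Fr1_decomp:
  assumes "e \<in> Fr1"
  shows "\<exists>r \<rho>. 1 \<le> r \<and> r \<le> s \<and> \<rho> \<in> Fr0 \<and> e = pre 1 r \<rho>"
proof -
  have eS: "inS s e" "e 0 = 1" "inS s (scons 0 e)" using assms by (auto simp: Fr1_def)
  have bin: "binary e" using eS(1) by (rule inS_binary)
  have "\<not> (\<forall>i\<le>s. e i = 1)" using eS inS_scons[of 0 s e] by simp
  then obtain i0 where i0: "i0 \<le> s" "e i0 \<noteq> 1" by auto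
  then have ei0: "e i0 = 0" using binary_vals[OF bin, of i0] by blast
  define r where "r = (LEAST n. e n = 0)"
  have er: "e r = 0" unfolding r_def using ei0 by (rule LeastI)
  have rle: "r \<le> i0" unfolding r_def using ei0 by (rule Least_le)
  have lt: "e n = 1" if "n < r" for n
    using not_less_Least[of n "\<lambda>n. e n = 0"] that binary_vals[OF bin, of n] unfolding r_def by auto
  have r1: "1 \<le> r" using er eS(2) by (cases r) auto
  define \<rho> where "\<rho> = shift r e"
  have epre: "e = pre 1 r \<rho>"
    unfolding \<rho>_def pre_def shift_def using lt by (auto intro!: ext)
  have "inS s \<rho>" unfolding \<rho>_def by (rule inS_shift[OF eS(1)])
  moreover have "\<rho> 0 = 0" using er by (simp add: \<rho>_def shift_def)
  moreover have "scons 1 \<rho> = shift (r - 1) e"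
    unfolding \<rho>_def scons_def shift_def using lt r1
    by (auto intro!: ext split: nat.split simp: Suc_diff_le)
  then have "inS s (scons 1 \<rho>)" using inS_shift[OF eS(1)] by simp
  ultimately have "\<rho> \<in> Fr0" by (simp add: Fr0_def)
  then show ?thesis using epre r1 rle i0 by auto
qed

lemma S0_decomp:
  assumes "inS s e" "e 0 = 0"
  shows "e = (\<lambda>_. 0) \<or> (\<exists>n \<rho>. 1 \<le> n \<and> \<rho> \<in> Fr1 \<and> e = pre 0 n \<rho>)"
proof (cases "\<forall>n. e n = 0")
  case True then show ?thesis by auto
next
  case False
  have bin: "binary e" using assms(1) by (rule inS_binary)
  from False obtain i0 where "e i0 \<noteq> 0" by auto
  then have ei0: "e i0 = 1" using binary_vals[OF bin, of i0] by auto
  define r where "r = (LEAST n. e n = 1)"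
  have er: "e r = 1" unfolding r_def using ei0 by (rule LeastI)
  have lt: "e n = 0" if "n < r" for n
    using not_less_Least[of n "\<lambda>n. e n = 1"] that binary_vals[OF bin, of n] unfolding r_def by auto
  have r1: "1 \<le> r" using er assms(2) by (cases r) auto
  define \<rho> where "\<rho> = shift r e"
  have epre: "e = pre 0 r \<rho>"
    unfolding \<rho>_def pre_def shift_def using lt by (auto intro!: ext)
  have "inS s \<rho>" unfolding \<rho>_def by (rule inS_shift[OF assms(1)])
  moreover have "\<rho> 0 = 1" using er by (simp add: \<rho>_def shift_def)
  moreover have "scons 0 \<rho> = shift (r - 1) e"
    unfolding \<rho>_def scons_def shift_def using lt r1
    by (auto intro!: ext split: nat.split simp: Suc_diff_le)
  then have "inS s (scons 0 \<rho>)" using inS_shift[OF assms(1)] by simp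
  ultimately have "\<rho> \<in> Fr1" by (simp add: Fr1_def)
  then show ?thesis using epre r1 by auto
qed

lemma zeros_inS: "inS s (\<lambda>_. 0)"
  unfolding inS_def binary_def by force

end


lemma sum_pow_div_strict:
  fixes x y :: real
  assumes "0 < x" "x < y" "1 \<le> j"
  shows "(\<Sum>i<j. y ^ i / y ^ j) < (\<Sum>i<j. x ^ i / x ^ j)"
proof (rule sum_strict_mono)
  show "finite {..<j}" by simp
  have "0 \<in> {..<j}" using assms by simp
  then show "{..<j} \<noteq> {}" by blast
  fix i assume "i \<in> {..<j}"
  then have ij: "i < j" by simp
  have "y ^ i / y ^ j = (1 / y) ^ (j - i)" using assms ij
    by (simp add: power_diff power_one_over)
  moreover have "x ^ i / x ^ j = (1 / x) ^ (j - i)" using assms ij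
    by (simp add: power_diff power_one_over)
  moreover have "(1 / y) ^ (j - i) < (1 / x) ^ (j - i)"
    using assms ij by (intro power_strict_mono) (auto simp: divide_strict_left_mono)
  ultimately show "y ^ i / y ^ j < x ^ i / x ^ j" by simp
qed

lemma multinacci_ineq:
  fixes q :: real
  assumes j: "2 \<le> j" and mq: "multinacci j < q" and q2: "q < 2"
  shows "(\<Sum>i<j. q ^ i) < q ^ j"
proof -
  define p where "p x = x ^ j - (\<Sum>i<j. x ^ i)" for x :: real
  have cont: "continuous_on {1..2} p" unfolding p_def by (intro continuous_intros)
  have p1: "p 1 < 0" using j by (simp add: p_def)
  have p2: "p 2 > 0"
  proof -
    have "(\<Sum>i<j. (2::real) ^ i) = 2 ^ j - 1"
      using geometric_sum[of "2::real" j] by simp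
    then show ?thesis by (simp add: p_def)
  qed
  obtain r where r: "1 \<le> r" "r \<le> 2" "p r = 0"
    using IVT'[of p 1 0 2] p1 p2 cont by force
  have r12: "1 < r" "r < 2" using r p1 p2 by (auto simp: order.order_iff_strict)
  have ratio: "(\<Sum>i<j. x ^ i / x ^ j) = 1" if "x > 0" "p x = 0" for x :: real
  proof -
    have "(\<Sum>i<j. x ^ i / x ^ j) = (\<Sum>i<j. x ^ i) / x ^ j" by (simp add: sum_divide_distrib)
    also have "\<dots> = 1"
    proof -
      have "x ^ j = (\<Sum>i<j. x ^ i)" using that(2) by (simp add: p_def)
      moreover have "x ^ j > 0" using that(1) by simp
      ultimately show ?thesis by simp
    qed
    finally show ?thesis .
  qed
  have uniq: "x = r" if "1 < x \<and> x < 2 \<and> x ^ j = (\<Sum>i<j. x ^ i)" for x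
  proof (rule ccontr)
    assume "x \<noteq> r"
    then consider "x < r" | "r < x" by linarith
    then show False
    proof cases
      case 1
      have "(\<Sum>i<j. r ^ i / r ^ j) < (\<Sum>i<j. x ^ i / x ^ j)"
        using sum_pow_div_strict[of x r j] 1 that j by auto
      then show False using ratio[of x] ratio[of r] r12 r that by (simp add: p_def)
    next
      case 2
      have "(\<Sum>i<j. x ^ i / x ^ j) < (\<Sum>i<j. r ^ i / r ^ j)"
        using sum_pow_div_strict[of r x j] 2 r12 j by auto
      then show False using ratio[of x] ratio[of r] r12 r that by (simp add: p_def)
    qed
  qed
  have rdef: "1 < r \<and> r < 2 \<and> r ^ j = (\<Sum>i<j. r ^ i)" using r12 r by (simp add: p_def)
  define P where "P x \<longleftrightarrow> 1 < x \<and> x < 2 \<and> x ^ j = (\<Sum>i<j. x ^ i)" for x :: real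
  have Pr: "P r" using rdef by (simp add: P_def)
  have Pu: "\<And>x. P x \<Longrightarrow> x = r" using uniq by (simp add: P_def)
  have "(THE x. P x) = r" by (rule the_equality[of P r, OF Pr Pu])
  moreover have "multinacci j = (THE x. P x)" unfolding multinacci_def P_def by simp
  ultimately have "multinacci j = r" by simp
  then have rq: "r < q" using mq by simp
  have "(\<Sum>i<j. q ^ i / q ^ j) < (\<Sum>i<j. r ^ i / r ^ j)"
    using sum_pow_div_strict[of r q j] rq r12 j by auto
  also have "\<dots> = 1" using ratio[of r] r12 r by simp
  finally have "(\<Sum>i<j. q ^ i) / q ^ j < 1" by (simp add: sum_divide_distrib)
  then show ?thesis using rq r12 by (simp add: divide_less_eq)
qed

lemma key_hyp:
  fixes q :: real
  assumes s1: "1 \<le> s" and mq: "multinacci (Suc s) < q" and q2: "q < 2" and q1: "1 < q"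
  shows "q * q ^ s * (2 - q) < 1"
proof -
  have "(\<Sum>i<Suc s. q ^ i) < q ^ Suc s" using multinacci_ineq[of "Suc s" q] s1 mq q2 by simp
  moreover have "(\<Sum>i<Suc s. q ^ i) = (q ^ Suc s - 1) / (q - 1)"
    using geometric_sum[of q "Suc s"] q1 by simp
  ultimately have "(q ^ Suc s - 1) / (q - 1) < q ^ Suc s" by simp
  then have "q ^ Suc s - 1 < q ^ Suc s * (q - 1)" using q1 by (simp add: divide_less_eq)
  then show ?thesis by (simp add: algebra_simps)
qed


context
  fixes q :: real and s :: nat
  assumes q1: "1 < q" and s1: "1 \<le> s"
begin

definition sg :: "real \<Rightarrow> real" where "sg x = 1 / (q - 1) - x"
definition AA :: "real set" where "AA = pi_q q ` Fr1 s"
definition CC :: "real set" where "CC = pi_q q ` {e. inS s e}"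
definition C0 :: "real set" where "C0 = pi_q q ` {e. inS s e \<and> e 0 = 0}"

lemma Fr1_binary: "e \<in> Fr1 s \<Longrightarrow> binary e"
  unfolding Fr1_def[OF s1] using inS_binary by blast
lemma Fr0_binary: "e \<in> Fr0 s \<Longrightarrow> binary e"
  unfolding Fr0_def[OF s1] using inS_binary by blast

lemma AA_pieces: "AA = (\<Union>r\<in>{1..s}. (\<lambda>a. cc q r + sg a / q ^ r) ` AA)"
proof (intro set_eqI iffI)
  fix v assume "v \<in> AA"
  then obtain e where e: "e \<in> Fr1 s" "v = pi_q q e" by (auto simp: AA_def)
  obtain r \<rho> where r: "1 \<le> r" "r \<le> s" "\<rho> \<in> Fr0 s" "e = pre 1 r \<rho>"
    using Fr1_decomp[OF s1 e(1)] by blast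
  have b\<rho>: "binary \<rho>" using r(3) by (rule Fr0_binary)
  have "v = cc q r + pi_q q \<rho> / q ^ r" using e r pi_pre[OF q1 b\<rho>, of 1 r] by simp
  moreover have "pi_q q \<rho> = sg (pi_q q (cmp \<rho>))"
    using pi_cmp[OF q1 b\<rho>] by (simp add: sg_def)
  moreover have "pi_q q (cmp \<rho>) \<in> AA" using cmp_Fr0[OF s1 r(3)] by (simp add: AA_def)
  ultimately show "v \<in> (\<Union>r\<in>{1..s}. (\<lambda>a. cc q r + sg a / q ^ r) ` AA)" using r(1,2) by auto
next
  fix v assume "v \<in> (\<Union>r\<in>{1..s}. (\<lambda>a. cc q r + sg a / q ^ r) ` AA)"
  then obtain r a where r: "1 \<le> r" "r \<le> s" "a \<in> AA" "v = cc q r + sg a / q ^ r" by auto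
  obtain e where e: "e \<in> Fr1 s" "a = pi_q q e" using r(3) by (auto simp: AA_def)
  have c: "cmp e \<in> Fr0 s" by (rule cmp_Fr1[OF s1 e(1)])
  have "pre 1 r (cmp e) \<in> Fr1 s" by (rule pre1_Fr1[OF s1 c r(1,2)])
  moreover have "pi_q q (pre 1 r (cmp e)) = v"
    using pi_pre[OF q1 Fr0_binary[OF c], of 1 r] pi_cmp[OF q1 Fr1_binary[OF e(1)]] r e
    by (simp add: sg_def)
  ultimately show "v \<in> AA" unfolding AA_def by (metis image_eqI)
qed

lemma C0_eq: "C0 = {0} \<union> (\<Union>n\<in>{1..}. (\<lambda>a. a / q ^ n) ` AA)"
proof (intro set_eqI iffI)
  fix v assume "v \<in> C0"
  then obtain e where e: "inS s e" "e 0 = 0" "v = pi_q q e" by (auto simp: C0_def)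
  from S0_decomp[OF s1 e(1,2)] show "v \<in> {0} \<union> (\<Union>n\<in>{1..}. (\<lambda>a. a / q ^ n) ` AA)"
  proof
    assume "e = (\<lambda>_. 0)" then show ?thesis using e pi_zeros[OF q1] by simp
  next
    assume "\<exists>n \<rho>. 1 \<le> n \<and> \<rho> \<in> Fr1 s \<and> e = pre 0 n \<rho>"
    then obtain n \<rho> where n: "1 \<le> n" "\<rho> \<in> Fr1 s" "e = pre 0 n \<rho>" by blast
    have "v = pi_q q \<rho> / q ^ n" using e n pi_pre[OF q1 Fr1_binary[OF n(2)], of 0 n] by simp
    moreover have "pi_q q \<rho> \<in> AA" using n(2) by (simp add: AA_def)
    ultimately show ?thesis using n(1) by auto
  qed
next
  fix v assume "v \<in> {0} \<union> (\<Union>n\<in>{1..}. (\<lambda>a. a / q ^ n) ` AA)"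
  then consider "v = 0" | n a where "1 \<le> n" "a \<in> AA" "v = a / q ^ n" by auto
  then show "v \<in> C0"
  proof cases
    case 1
    have "inS s (\<lambda>_. 0)" by (rule zeros_inS[OF s1])
    then show ?thesis using 1 pi_zeros[OF q1] unfolding C0_def by (metis (mono_tags, lifting) image_eqI mem_Collect_eq)
  next
    case 2
    obtain \<rho> where \<rho>: "\<rho> \<in> Fr1 s" "a = pi_q q \<rho>" using 2 by (auto simp: AA_def)
    have "inS s (pre 0 n \<rho>)" by (rule pre0_inS[OF s1 \<rho>(1)])
    moreover have "pre 0 n \<rho> 0 = 0" using 2 by (simp add: pre_def)
    moreover have "pi_q q (pre 0 n \<rho>) = v" using pi_pre[OF q1 Fr1_binary[OF \<rho>(1)], of 0 n] 2 \<rho> by simp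
    ultimately show ?thesis unfolding C0_def by (metis (mono_tags, lifting) image_eqI mem_Collect_eq)
  qed
qed

lemma CC_eq: "CC = C0 \<union> sg ` C0"
proof (intro set_eqI iffI)
  fix v assume "v \<in> CC"
  then obtain e where e: "inS s e" "v = pi_q q e" by (auto simp: CC_def)
  have b: "binary e" using e(1) by (rule inS_binary)
  show "v \<in> C0 \<union> sg ` C0"
  proof (cases "e 0 = 0")
    case True then show ?thesis using e unfolding C0_def by blast
  next
    case False
    then have "e 0 = 1" using binary_vals[OF b, of 0] by auto
    then have "cmp e 0 = 0" by (simp add: cmp_def)
    moreover have "inS s (cmp e)" by (rule inS_cmp[OF e(1)])
    ultimately have "pi_q q (cmp e) \<in> C0" unfolding C0_def by blast
    moreover have "v = sg (pi_q q (cmp e))" using pi_cmp[OF q1 b] e by (simp add: sg_def)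
    ultimately show ?thesis by blast
  qed
next
  fix v assume "v \<in> C0 \<union> sg ` C0"
  then consider "v \<in> C0" | w where "w \<in> C0" "v = sg w" by blast
  then show "v \<in> CC"
  proof cases
    case 1 then show ?thesis unfolding C0_def CC_def by blast
  next
    case 2
    obtain e where e: "inS s e" "e 0 = 0" "w = pi_q q e" using 2 by (auto simp: C0_def)
    have b: "binary e" using e(1) by (rule inS_binary)
    have "v = pi_q q (cmp e)" using pi_cmp[OF q1 b] e 2 by (simp add: sg_def)
    moreover have "inS s (cmp e)" by (rule inS_cmp[OF e(1)])
    ultimately show ?thesis unfolding CC_def by blast
  qed
qed

lemma AA_bounds: "AA \<subseteq> {0 .. 1 / (q - 1)}"
  unfolding AA_def using pi_nonneg[OF q1] pi_le[OF q1] Fr1_binary by auto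

lemma CC_bounds: "CC \<subseteq> {0 .. 1 / (q - 1)}"
  unfolding CC_def using pi_nonneg[OF q1] pi_le[OF q1] inS_binary by auto

lemma CC_0: "0 \<in> CC"
  unfolding CC_def using zeros_inS[OF s1] pi_zeros[OF q1] by (metis image_eqI mem_Collect_eq)

lemma CC_top: "1 / (q - 1) \<in> CC"
proof -
  have "inS s (cmp (\<lambda>_. 0))" by (rule inS_cmp[OF zeros_inS[OF s1]])
  moreover have "cmp (\<lambda>_. 0) = (\<lambda>_. 1)" by (simp add: cmp_def)
  ultimately show ?thesis unfolding CC_def using pi_ones[OF q1] by (metis image_eqI mem_Collect_eq)
qed

lemma CC_sym: "sg ` CC = CC"
proof -
  have "sg ` sg ` C0 = C0" by (force simp: sg_def image_iff)
  then show ?thesis unfolding CC_eq by (auto simp: image_Un)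
qed

definition seqx :: "nat \<Rightarrow> nat" where
  "seqx n = (if n mod Suc s = 0 then 1 else 0)"

lemma seqx_Fr1: "seqx \<in> Fr1 s"
proof -
  have bin: "binary seqx" by (simp add: binary_def seqx_def)
  have A: "\<not> (seqx n = 0 \<and> (\<forall>i\<le>s. seqx (Suc (n + i)) = 1))" for n
  proof
    assume H: "seqx n = 0 \<and> (\<forall>i\<le>s. seqx (Suc (n + i)) = 1)"
    have h: "\<forall>i\<le>s. seqx (Suc (n + i)) = 1" using H by blast
    have "seqx (Suc n) = 1" using h[rule_format, of 0] by simp
    moreover have "seqx (Suc (Suc n)) = 1" using h[rule_format, of 1] s1 by simp
    ultimately have "(if Suc n mod Suc s = 0 then 1 else 0) = (1::nat)"
        "(if Suc (Suc n) mod Suc s = 0 then 1 else 0) = (1::nat)" unfolding seqx_def .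
    then have "Suc n mod Suc s = 0" "Suc (Suc n) mod Suc s = 0" by (meson zero_neq_one)+
    then have "Suc s dvd Suc n" "Suc s dvd Suc (Suc n)" by auto
    then have "Suc s dvd 1" using dvd_diff_nat[of "Suc s" "Suc (Suc n)" "Suc n"] by simp
    then show False using s1 by simp
  qed
  have B: "\<not> (seqx n = 1 \<and> (\<forall>i\<le>s. seqx (Suc (n + i)) = 0))" for n
  proof
    assume H: "seqx n = 1 \<and> (\<forall>i\<le>s. seqx (Suc (n + i)) = 0)"
    then have "(if n mod Suc s = 0 then 1 else 0) = (1::nat)" unfolding seqx_def by blast
    then have "n mod Suc s = 0" by (meson zero_neq_one)
    then have "Suc (n + s) mod Suc s = 0" by (metis add_Suc_right mod_add_self2)
    then have "seqx (Suc (n + s)) = 1" by (simp add: seqx_def)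
    then show False using H by auto
  qed
  have "inS s seqx" unfolding inS_def using bin A B by blast
  moreover have "seqx 0 = 1" by (simp add: seqx_def)
  moreover have "\<not> (\<forall>i\<le>s. seqx i = 1)"
  proof -
    have "seqx 1 = 0" using s1 by (simp add: seqx_def)
    then show ?thesis using s1 by force
  qed
  then have "inS s (scons 0 seqx)" using inS_scons[of 0 s seqx] \<open>inS s seqx\<close> by simp
  ultimately show ?thesis by (simp add: Fr1_def[OF s1])
qed

lemma seqx_period: "seqx = scons 1 (pre 0 s seqx)"
proof
  fix n show "seqx n = scons 1 (pre 0 s seqx) n"
  proof (cases n)
    case 0 then show ?thesis by (simp add: seqx_def scons_def)
  next
    case (Suc m)
    show ?thesis
    proof (cases "m < s")
      case True
      then have "Suc m mod Suc s = Suc m" by simp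
      then show ?thesis using Suc True by (simp add: seqx_def scons_def pre_def)
    next
      case False
      then have "Suc m = (m - s) + Suc s" by simp
      then have "Suc m mod Suc s = (m - s) mod Suc s" by (metis mod_add_self2)
      then show ?thesis using Suc False by (simp add: seqx_def scons_def pre_def)
    qed
  qed
qed

definition xx :: real where "xx = q ^ s / (q * q ^ s - 1)"
definition yy :: real where "yy = 1 / (q - 1) - xx / q ^ s"

lemma pi_seqx: "pi_q q seqx = xx"
proof -
  have bin: "binary seqx" by (simp add: binary_def seqx_def)
  have bp: "binary (pre 0 s seqx)" by (rule binary_pre) (use bin in auto)
  have "pi_q q seqx = (1 + pi_q q (pre 0 s seqx)) / q"
    using pi_scons[OF q1 bp, of 1] seqx_period by simp
  also have "pi_q q (pre 0 s seqx) = pi_q q seqx / q ^ s" using pi_pre[OF q1 bin, of 0 s] by simp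
  finally have eq: "pi_q q seqx = (1 + pi_q q seqx / q ^ s) / q" .
  have "1 \<le> q ^ s" using q1 by (simp add: one_le_power)
  then have "q \<le> q * q ^ s" using mult_left_mono[of 1 "q ^ s" q] q1 by simp
  then have qs1: "q * q ^ s - 1 > 0" using q1 by linarith
  have qs: "q ^ s > 0" "q * q ^ s - 1 > 0" using q1 qs1 by auto
  from eq have "pi_q q seqx * (q * q ^ s - 1) = q ^ s" using qs q1 by (simp add: field_simps)
  then show ?thesis unfolding xx_def using qs by (simp add: field_simps)
qed

lemma xx_AA: "xx \<in> AA"
  using seqx_Fr1 pi_seqx unfolding AA_def by (metis image_eqI)

lemma yy_AA: "yy \<in> AA"
proof -
  have eq: "(\<Union>r\<in>{1..s}. (\<lambda>a. cc q r + sg a / q ^ r) ` AA) = AA" by (rule AA_pieces[symmetric])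
  have "s \<in> {1..s}" using s1 by simp
  then have "(\<lambda>a. cc q s + sg a / q ^ s) ` AA \<subseteq> (\<Union>r\<in>{1..s}. (\<lambda>a. cc q r + sg a / q ^ r) ` AA)" by blast
  then have "(\<lambda>a. cc q s + sg a / q ^ s) ` AA \<subseteq> AA" unfolding eq .
  then have "cc q s + sg xx / q ^ s \<in> AA" using xx_AA by blast
  moreover have "cc q s + sg xx / q ^ s = yy"
  proof -
    have P: "q ^ s > 0" "q - 1 > 0" using q1 by auto
    have "cc q s + sg xx / q ^ s = (1 - 1 / q ^ s) / (q - 1) + (1 / (q - 1) - xx) / q ^ s"
      by (simp add: cc_def[OF q1] sg_def)
    also have "\<dots> = 1 / (q - 1) - 1 / (q ^ s * (q - 1)) + (1 / ((q - 1) * q ^ s) - xx / q ^ s)"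
      by (simp add: diff_divide_distrib divide_divide_eq_left)
    also have "\<dots> = 1 / (q - 1) - xx / q ^ s" by (simp add: mult.commute)
    finally show ?thesis by (simp add: yy_def)
  qed
  ultimately show ?thesis by simp
qed

end


context
  fixes q :: real and s :: nat
  assumes q1: "1 < q" and s1: "1 \<le> s"
begin

abbreviation "A \<equiv> AA q s"
abbreviation "sgm \<equiv> sg q"
abbreviation "x0 \<equiv> xx q s"
abbreviation "y0 \<equiv> yy q s"

lemmas xxd = xx_def[OF q1 s1]
lemmas yyd = yy_def[OF q1 s1]
lemmas sgd = sg_def[OF q1 s1]

lemma piece_in: "1 \<le> r \<Longrightarrow> r \<le> s \<Longrightarrow> a \<in> A \<Longrightarrow> cc q r + sgm a / q ^ r \<in> A"
proof -
  assume r: "1 \<le> r" "r \<le> s" and a: "a \<in> A"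
  have eq: "(\<Union>r\<in>{1..s}. (\<lambda>a. cc q r + sg q a / q ^ r) ` AA q s) = AA q s"
    by (rule AA_pieces[OF q1 s1, symmetric])
  have "r \<in> {1..s}" using r by simp
  then have "(\<lambda>a. cc q r + sg q a / q ^ r) ` AA q s \<subseteq> (\<Union>r\<in>{1..s}. (\<lambda>a. cc q r + sg q a / q ^ r) ` AA q s)" by blast
  then have "(\<lambda>a. cc q r + sg q a / q ^ r) ` AA q s \<subseteq> AA q s" unfolding eq .
  then show ?thesis using a by blast
qed

lemma piece_of: "a \<in> A \<Longrightarrow> \<exists>r a'. 1 \<le> r \<and> r \<le> s \<and> a' \<in> A \<and> a = cc q r + sgm a' / q ^ r"
proof -
  assume "a \<in> A"
  then have "a \<in> (\<Union>r\<in>{1..s}. (\<lambda>a. cc q r + sg q a / q ^ r) ` AA q s)"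
    using AA_pieces[OF q1 s1] by simp
  then show ?thesis by auto
qed

lemma cc_Suc: "cc q (Suc r) = cc q r + 1 / q ^ Suc r"
proof -
  have P: "q ^ r > 0" "q - 1 > 0" using q1 by auto
  have "cc q (Suc r) - cc q r = (1 / q ^ r - 1 / q ^ Suc r) / (q - 1)"
    by (simp add: cc_def[OF q1] diff_divide_distrib)
  also have "1 / q ^ r - 1 / q ^ Suc r = (q - 1) / q ^ Suc r"
    using P by (simp add: field_simps)
  finally show ?thesis using P by simp
qed

lemma cc_1: "cc q 1 = 1 / q"
  using cc_Suc[of 0] by (simp add: cc_def[OF q1])

lemma cc_s: "cc q s + (1 / (q - 1)) / q ^ s = 1 / (q - 1)"
proof -
  have P: "q ^ s > 0" "q - 1 > 0" using q1 by auto
  have "cc q s = 1 / (q - 1) - 1 / (q ^ s * (q - 1))"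
    by (simp add: cc_def[OF q1] diff_divide_distrib divide_divide_eq_left)
  then show ?thesis by (simp add: mult.commute)
qed

lemma piece_mono:
  assumes w: "0 \<le> w" "w \<le> 1 / (q - 1)" and r: "r \<le> r'"
  shows "cc q r + w / q ^ r \<le> cc q r' + w / q ^ r'"
  using r
proof (induction r' rule: dec_induct)
  case base then show ?case by simp
next
  case (step n)
  have P: "q ^ n > 0" "q - 1 > 0" using q1 by auto
  have "w * (q - 1) \<le> 1" using w P by (simp add: field_simps)
  then have "q * w \<le> 1 + w" by (simp add: algebra_simps)
  then have "(q * w) / q ^ Suc n \<le> (1 + w) / q ^ Suc n" using P by (simp add: divide_right_mono del: power_Suc)
  moreover have "(q * w) / q ^ Suc n = w / q ^ n" using P q1 by simp
  ultimately have "w / q ^ n \<le> (1 + w) / q ^ Suc n" by (simp del: power_Suc)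
  then have "w / q ^ n \<le> 1 / q ^ Suc n + w / q ^ Suc n" by (simp only: add_divide_distrib)
  then show ?case using step cc_Suc[of n] by simp
qed

lemma A_ne: "A \<noteq> {}" using xx_AA[OF q1 s1] by blast

lemma A_bdd: "bdd_below A" "bdd_above A"
  using AA_bounds[OF q1 s1] by (auto intro: bdd_below_mono bdd_above_mono)

lemma xx_eq: "x0 = (1 + x0 / q ^ s) / q"
proof -
  have P: "q ^ s > 0" "q * q ^ s - 1 > 0"
  proof -
    show "q ^ s > 0" using q1 by simp
    have "1 \<le> q ^ s" using q1 by (simp add: one_le_power)
    then have "q \<le> q * q ^ s" using mult_left_mono[of 1 "q ^ s" q] q1 by simp
    then show "q * q ^ s - 1 > 0" using q1 by linarith
  qed
  show ?thesis unfolding xxd using P q1 by (simp add: field_simps)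
qed

lemma xx_pos: "0 < x0"
proof -
  have "1 \<le> q ^ s" using q1 by (simp add: one_le_power)
  then have "q \<le> q * q ^ s" using mult_left_mono[of 1 "q ^ s" q] q1 by simp
  then have "q * q ^ s - 1 > 0" using q1 by linarith
  then show ?thesis unfolding xxd using q1 by simp
qed

lemma A_in_bounds: "a \<in> A \<Longrightarrow> x0 \<le> a \<and> a \<le> y0"
proof -
  assume aA: "a \<in> A"
  define m where "m = Inf A"
  define M where "M = Sup A"
  have bnd: "\<And>a. a \<in> A \<Longrightarrow> 0 \<le> a \<and> a \<le> 1 / (q - 1)" using AA_bounds[OF q1 s1] by auto
  have mle: "\<And>a. a \<in> A \<Longrightarrow> m \<le> a" unfolding m_def using A_bdd by (simp add: cInf_lower)
  have Mge: "\<And>a. a \<in> A \<Longrightarrow> a \<le> M" unfolding M_def using A_bdd by (simp add: cSup_upper)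
  have m0: "0 \<le> m" unfolding m_def using A_ne bnd by (intro cInf_greatest) auto
  have M1: "M \<le> 1 / (q - 1)" unfolding M_def using A_ne bnd by (intro cSup_least) auto
  have mM: "m \<le> M" using mle Mge xx_AA[OF q1 s1] by (meson order.trans)
  have P: "q ^ s > 0" "q > 0" "q - 1 > 0" using q1 by auto
  have low: "cc q 1 + sgm M / q \<le> b" if bA: "b \<in> A" for b
  proof -
    obtain r a' where r: "1 \<le> r" "r \<le> s" "a' \<in> A" "b = cc q r + sgm a' / q ^ r"
      using piece_of[OF bA] by blast
    have "sgm M \<le> sgm a'" using Mge[OF r(3)] by (simp add: sgd)
    then have "cc q r + sgm M / q ^ r \<le> b" using r(4) P by (simp add: divide_right_mono)
    moreover have "cc q 1 + sgm M / q ^ 1 \<le> cc q r + sgm M / q ^ r"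
      by (rule piece_mono) (use M1 mM m0 r in \<open>auto simp: sgd\<close>)
    ultimately show ?thesis by simp
  qed
  have high: "b \<le> cc q s + sgm m / q ^ s" if bA: "b \<in> A" for b
  proof -
    obtain r a' where r: "1 \<le> r" "r \<le> s" "a' \<in> A" "b = cc q r + sgm a' / q ^ r"
      using piece_of[OF bA] by blast
    have "sgm a' \<le> sgm m" using mle[OF r(3)] by (simp add: sgd)
    then have "b \<le> cc q r + sgm m / q ^ r" using r(4) P by (simp add: divide_right_mono)
    moreover have "cc q r + sgm m / q ^ r \<le> cc q s + sgm m / q ^ s"
      by (rule piece_mono) (use M1 mM m0 r in \<open>auto simp: sgd\<close>)
    ultimately show ?thesis by simp
  qed
  have m_low: "cc q 1 + sgm M / q \<le> m" unfolding m_def using A_ne low by (intro cInf_greatest) auto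
  have M_high: "M \<le> cc q s + sgm m / q ^ s" unfolding M_def using A_ne high by (intro cSup_least) auto
  have M_high': "M \<le> 1 / (q - 1) - m / q ^ s"
  proof -
    have "cc q s + sgm m / q ^ s = (cc q s + (1 / (q - 1)) / q ^ s) - m / q ^ s"
      by (simp add: sgd diff_divide_distrib)
    then show ?thesis using M_high cc_s by simp
  qed
  have m_low': "1 / q + (1 / (q - 1) - M) / q \<le> m" using m_low cc_1 by (simp add: sgd)
  have "m / q ^ s \<le> 1 / (q - 1) - M" using M_high' by linarith
  then have "(m / q ^ s) / q \<le> (1 / (q - 1) - M) / q" by (rule divide_right_mono) (use P in auto)
  then have "1 / q + (m / q ^ s) / q \<le> m" using m_low' by linarith
  then have "1 + m / q ^ s \<le> q * m" using P by (simp add: field_simps)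
  then have key: "q ^ s \<le> m * (q * q ^ s - 1)" using P by (simp add: field_simps)
  have qs: "q * q ^ s - 1 > 0"
  proof -
    have "1 \<le> q ^ s" using q1 by (simp add: one_le_power)
    then have "q \<le> q * q ^ s" using mult_left_mono[of 1 "q ^ s" q] q1 by simp
    then show ?thesis using q1 by linarith
  qed
  have xm: "x0 \<le> m" unfolding xxd using key qs by (simp add: divide_le_eq mult.commute)
  have "M \<le> y0"
  proof -
    have "m / q ^ s \<ge> x0 / q ^ s" using xm P by (simp add: divide_right_mono)
    then show ?thesis using M_high' by (simp add: yyd)
  qed
  then show ?thesis using xm mle[OF aA] Mge[OF aA] by simp
qed

lemma xx_le_yy: "x0 \<le> y0" using A_in_bounds xx_AA[OF q1 s1] by blast

lemma yy_pos: "0 < y0" using xx_le_yy xx_pos by simp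

lemma sg_yy: "1 / (q - 1) - y0 / q = x0"
proof -
  have P: "q ^ s > 0" "q - 1 > 0" using q1 by auto
  have "1 / (q - 1) - y0 / q = 1 / (q - 1) - (1 / (q - 1)) / q + (x0 / q ^ s) / q"
    by (simp add: yyd diff_divide_distrib)
  also have "1 / (q - 1) - (1 / (q - 1)) / q = 1 / q"
  proof -
    have gen: "t - t / q = t * (q - 1) / q" for t using P by (simp add: field_simps)
    show ?thesis using gen[of "1 / (q - 1)"] P by simp
  qed
  finally have "1 / (q - 1) - y0 / q = 1 / q + (x0 / q ^ s) / q" .
  also have "\<dots> = (1 + x0 / q ^ s) / q" by (simp add: add_divide_distrib)
  also have "\<dots> = x0" using xx_eq by simp
  finally show ?thesis .
qed

end


context
  fixes q :: real and s :: nat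
  assumes q1: "1 < q" and s1: "1 \<le> s"
begin

abbreviation "AS \<equiv> AA q s"
abbreviation "sgq \<equiv> sg q"
abbreviation "xq \<equiv> xx q s"
abbreviation "yq \<equiv> yy q s"
lemmas sgd2 = sg_def[OF q1 s1]

definition lo :: "nat \<Rightarrow> real" where "lo r = cc q r + sgq yq / q ^ r"
definition hi :: "nat \<Rightarrow> real" where "hi r = cc q r + sgq xq / q ^ r"

lemma piece_bounds:
  assumes "a' \<in> AS"
  shows "lo r \<le> cc q r + sgq a' / q ^ r \<and> cc q r + sgq a' / q ^ r \<le> hi r"
proof -
  have "xq \<le> a'" "a' \<le> yq" using A_in_bounds[OF q1 s1 assms] by auto
  then have "sgq yq \<le> sgq a'" "sgq a' \<le> sgq xq" by (auto simp: sgd2)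
  then show ?thesis unfolding lo_def hi_def using q1 by (auto intro: divide_right_mono)
qed

lemma lo_in: "1 \<le> r \<Longrightarrow> r \<le> s \<Longrightarrow> lo r \<in> AS"
  unfolding lo_def using piece_in[OF q1 s1] yy_AA[OF q1 s1] by blast

lemma hi_in: "1 \<le> r \<Longrightarrow> r \<le> s \<Longrightarrow> hi r \<in> AS"
  unfolding hi_def using piece_in[OF q1 s1] xx_AA[OF q1 s1] by blast

lemma lo_le_hi: "lo r \<le> hi r"
  using piece_bounds[OF xx_AA[OF q1 s1]] by (meson order.trans)

lemma hi_lo_Suc: "lo (Suc r) - hi r = (q * xq - yq) / q ^ Suc r"
proof -
  have P: "q ^ r > 0" "q - 1 > 0" using q1 by auto
  have "lo (Suc r) - hi r = 1 / q ^ Suc r + sgq yq / q ^ Suc r - sgq xq / q ^ r"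
    unfolding lo_def hi_def using cc_Suc[OF q1 s1, of r] by simp
  also have "sgq xq / q ^ r = (q * sgq xq) / q ^ Suc r" using P q1 by simp
  also have "1 / q ^ Suc r + sgq yq / q ^ Suc r - (q * sgq xq) / q ^ Suc r
      = (1 + sgq yq - q * sgq xq) / q ^ Suc r" by (simp add: add_divide_distrib diff_divide_distrib)
  also have "1 + sgq yq - q * sgq xq = q * xq - yq"
  proof -
    have "1 + 1 / (q - 1) - q * (1 / (q - 1)) = 0" using P by (simp add: field_simps)
    then show ?thesis unfolding sgd2 by (simp add: algebra_simps)
  qed
  finally show ?thesis .
qed

context
  assumes Hy: "yq < q * xq"
begin

lemma hi_lt_lo: "r < r' \<Longrightarrow> hi r < lo r'"
proof (induction r' rule: less_induct)
  case (less r')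
  then obtain r'' where r'': "r' = Suc r''" by (cases r') auto
  have step: "hi r'' < lo r'"
  proof -
    have "lo r' - hi r'' = (q * xq - yq) / q ^ r'" using hi_lo_Suc[of r''] r'' by simp
    moreover have "(q * xq - yq) / q ^ r' > 0" using Hy q1 by simp
    ultimately show ?thesis by simp
  qed
  show ?case
  proof (cases "r = r''")
    case True then show ?thesis using step by simp
  next
    case False
    then have "r < r''" using less r'' by simp
    then have "hi r < lo r''" using less r'' by simp
    then show ?thesis using lo_le_hi[of r''] step by simp
  qed
qed

lemma A_gap_bound:
  assumes G: "G \<in> gaps AS"
  shows "glen G \<le> (q * xq - yq) / q ^ 2"
proof -
  define h where "h = (q * xq - yq) / q ^ 2"
  have h0: "0 \<le> h" unfolding h_def using Hy by simp
  define g where "g = Sup (glen ` gaps AS)"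
  have bnd: "\<And>a. a \<in> AS \<Longrightarrow> 0 \<le> a \<and> a \<le> 1 / (q - 1)" using AA_bounds[OF q1 s1] by auto
  have gl_bdd: "glen G' \<le> 1 / (q - 1)" if "G' \<in> gaps AS" for G'
    using that bnd by (auto simp: gaps_def glen_def) (smt (verit))
  have bdd: "bdd_above (glen ` gaps AS)" unfolding bdd_above_def using gl_bdd by blast
  have gle: "glen G' \<le> g" if "G' \<in> gaps AS" for G'
    unfolding g_def using bdd that by (simp add: cSup_upper)
  have each: "glen G' \<le> max (g / q) h" if G': "G' \<in> gaps AS" for G'
  proof -
    obtain u v where uv: "G' = (u, v)" by (cases G')
    have u: "u \<in> AS" and v: "v \<in> AS" and uv_lt: "u < v" and empty: "{u<..<v} \<inter> AS = {}"
      using G' uv by (auto simp: gaps_def)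
    obtain r a where r: "1 \<le> r" "r \<le> s" "a \<in> AS" "u = cc q r + sgq a / q ^ r" using piece_of[OF q1 s1 u] by blast
    obtain r' a' where r': "1 \<le> r'" "r' \<le> s" "a' \<in> AS" "v = cc q r' + sgq a' / q ^ r'" using piece_of[OF q1 s1 v] by blast
    have ub: "lo r \<le> u" "u \<le> hi r" using piece_bounds[OF r(3), of r] r(4) by auto
    have vb: "lo r' \<le> v" "v \<le> hi r'" using piece_bounds[OF r'(3), of r'] r'(4) by auto
    consider "r = r'" | "r < r'" | "r' < r" by linarith
    then show ?thesis
    proof cases
      case 1
      have P: "q ^ r > 0" using q1 by simp
      have "sgq a / q ^ r < sgq a' / q ^ r" using uv_lt r(4) r'(4) 1 by simp
      then have "sgq a / q ^ r * q ^ r < sgq a' / q ^ r * q ^ r" using P by (rule mult_strict_right_mono)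
      then have "sgq a < sgq a'" using P q1 by simp
      then have aa: "a' < a" by (simp add: sgd2)
      have "{a'<..<a} \<inter> AS = {}"
      proof (rule ccontr)
        assume "{a'<..<a} \<inter> AS \<noteq> {}"
        then obtain b where b: "b \<in> AS" "a' < b" "b < a" by auto
        have "cc q r + sgq b / q ^ r \<in> AS" using piece_in[OF q1 s1 r(1,2) b(1)] .
        moreover have "sgq a < sgq b" "sgq b < sgq a'" using b by (auto simp: sgd2)
        then have "sgq a / q ^ r < sgq b / q ^ r" "sgq b / q ^ r < sgq a' / q ^ r"
          using P by (auto simp: divide_strict_right_mono)
        then have "cc q r + sgq b / q ^ r \<in> {u<..<v}" using r(4) r'(4) 1 by auto
        ultimately show False using empty by blast
      qed
      then have "(a', a) \<in> gaps AS" using aa r(3) r'(3) by (simp add: gaps_def)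
      then have "a - a' \<le> g" using gle[of "(a', a)"] by (simp add: glen_def)
      moreover have "v - u = (a - a') / q ^ r" using r(4) r'(4) 1 by (simp add: sgd2 diff_divide_distrib)
      moreover have "q \<le> q ^ r" using q1 r(1) by (metis power_increasing power_one_right less_le_not_le)
      ultimately have "v - u \<le> g / q ^ r" using P by (simp add: divide_right_mono)
      also have "g / q ^ r \<le> g / q"
      proof -
        have "0 \<le> g" using gle[OF G'] uv uv_lt by (auto simp: glen_def)
        then show ?thesis using \<open>q \<le> q ^ r\<close> q1 by (simp add: divide_left_mono)
      qed
      finally show ?thesis using uv by (simp add: glen_def)
    next
      case 2
      show ?thesis
      proof (cases "Suc r < r'")
        case True
        have "lo (Suc r) \<in> AS" using lo_in[of "Suc r"] True r' by simp
        moreover have "u < lo (Suc r)" using ub hi_lt_lo[of r "Suc r"] by simp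
        moreover have "lo (Suc r) < v" using lo_le_hi[of "Suc r"] hi_lt_lo[OF True] vb by simp
        ultimately show ?thesis using empty by auto
      next
        case False
        then have rr: "r' = Suc r" using 2 by simp
        have "hi r \<in> AS" using hi_in r by simp
        have "lo r' \<in> AS" using lo_in r' by simp
        have hl: "hi r < lo r'" using hi_lt_lo 2 by simp
        have u_eq: "hi r \<le> u"
        proof (rule ccontr)
          assume "\<not> hi r \<le> u"
          then have "hi r \<in> {u<..<v}" using hl vb by auto
          then show False using empty \<open>hi r \<in> AS\<close> by blast
        qed
        have v_eq: "v \<le> lo r'"
        proof (rule ccontr)
          assume "\<not> v \<le> lo r'"
          then have "lo r' \<in> {u<..<v}" using hl ub by auto
          then show False using empty \<open>lo r' \<in> AS\<close> by blast
        qed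
        have "v - u \<le> lo (Suc r) - hi r" using u_eq v_eq rr by simp
        also have "\<dots> = (q * xq - yq) / q ^ Suc r" by (rule hi_lo_Suc)
        also have "\<dots> \<le> (q * xq - yq) / q ^ 2"
        proof (rule divide_left_mono)
          show "0 \<le> q * xq - yq" using Hy by simp
          show "q ^ 2 \<le> q ^ Suc r" using q1 r(1) by (intro power_increasing) auto
          show "0 < q ^ Suc r * q ^ 2" using q1 by simp
        qed
        finally show ?thesis using uv by (simp add: glen_def h_def)
      qed
    next
      case 3
      have "v \<le> hi r'" by (rule vb(2))
      also have "hi r' < lo r" using hi_lt_lo[OF 3] .
      also have "lo r \<le> u" by (rule ub(1))
      finally show ?thesis using uv_lt by simp
    qed
  qed
  have "g \<le> max (g / q) h"
    unfolding g_def using G each by (intro cSup_least) (auto simp: g_def)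
  then have "g \<le> h"
  proof -
    assume gm: "g \<le> max (g / q) h"
    show "g \<le> h"
    proof (rule ccontr)
      assume "\<not> g \<le> h"
      then have "g \<le> g / q" using gm by simp
      moreover have "g > 0" using \<open>\<not> g \<le> h\<close> h0 by simp
      ultimately show False using q1 by (simp add: divide_le_eq field_simps)
    qed
  qed
  then show ?thesis using gle[OF G] unfolding h_def by simp
qed

end

end


context
  fixes q :: real and s :: nat
  assumes q1: "1 < q" and s1: "1 \<le> s"
begin

abbreviation "CS \<equiv> CC q s"
abbreviation "AS2 \<equiv> AA q s"
abbreviation "xs \<equiv> xx q s"
abbreviation "ys \<equiv> yy q s"
lemmas sgd3 = sg_def[OF q1 s1]

lemma AA_sub_CC: "AS2 \<subseteq> CS"
  unfolding AA_def[OF q1 s1] CC_def[OF q1 s1] Fr1_def[OF s1] by auto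

lemma A_div_in: "a \<in> AS2 \<Longrightarrow> a / q ^ m \<in> CS"
proof (cases m)
  case 0
  assume "a \<in> AS2" then show ?thesis using AA_sub_CC 0 by auto
next
  case (Suc m')
  assume a: "a \<in> AS2"
  have "m \<in> {1..}" using Suc by simp
  moreover have "a / q ^ m \<in> (\<lambda>a. a / q ^ m) ` AS2" using a by blast
  ultimately have "a / q ^ m \<in> (\<Union>n\<in>{1..}. (\<lambda>a. a / q ^ n) ` AS2)" by blast
  then have "a / q ^ m \<in> C0 q s" unfolding C0_eq[OF q1 s1] by blast
  then show ?thesis unfolding CC_eq[OF q1 s1] by blast
qed

lemma CS_cases:
  assumes "c \<in> CS"
  shows "c = 0 \<or> (\<exists>n a. 1 \<le> n \<and> a \<in> AS2 \<and> c = a / q ^ n) \<or> xs \<le> c"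
proof -
  have ys1: "ys \<le> 1 / (q - 1)" using yy_AA[OF q1 s1] AA_bounds[OF q1 s1] by auto
  have xy: "xs \<le> ys" by (rule xx_le_yy[OF q1 s1])
  from assms consider "c \<in> C0 q s" | w where "w \<in> C0 q s" "c = sg q w"
    unfolding CC_eq[OF q1 s1] by blast
  then show ?thesis
  proof cases
    case 1 then show ?thesis unfolding C0_eq[OF q1 s1] by auto
  next
    case 2
    from 2(1) consider "w = 0" | n a where "1 \<le> n" "a \<in> AS2" "w = a / q ^ n"
      unfolding C0_eq[OF q1 s1] by auto
    then show ?thesis
    proof cases
      case 1 then show ?thesis using 2 ys1 xy by (simp add: sgd3)
    next
      case 3: 2
      have "a \<le> ys" using A_in_bounds[OF q1 s1 3(2)] by simp
      have "a / q ^ n \<le> a / q ^ 1"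
        using A_in_bounds[OF q1 s1 3(2)] xx_pos[OF q1 s1] q1 3(1)
        by (intro divide_left_mono power_increasing) auto
      also have "\<dots> \<le> ys / q" using \<open>a \<le> ys\<close> q1 by (simp add: divide_right_mono)
      finally have "w \<le> ys / q" using 3 by simp
      then have "xs \<le> c" using 2 sg_yy[OF q1 s1] by (simp add: sgd3)
      then show ?thesis by simp
    qed
  qed
qed

lemma CS_bounds: "CS \<subseteq> {0 .. 1 / (q - 1)}" by (rule CC_bounds[OF q1 s1])

lemma div_pow_anti: "0 \<le> a \<Longrightarrow> n \<le> m \<Longrightarrow> a / q ^ m \<le> a / q ^ n"
  using q1 by (intro divide_left_mono power_increasing) auto

lemma div_pow_anti_strict: "0 < a \<Longrightarrow> n < m \<Longrightarrow> a / q ^ m < a / q ^ n"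
  using q1 by (intro divide_strict_left_mono power_strict_increasing) auto

context
  assumes Hy: "ys < q * xs"
begin

lemma yx_step: "ys / q ^ Suc n < xs / q ^ n"
proof -
  have e: "ys / q ^ Suc n = (ys / q) / q ^ n" by simp
  have "ys / q < xs" using Hy q1 by (simp add: divide_less_eq mult.commute)
  then have "(ys / q) / q ^ n < xs / q ^ n" by (rule divide_strict_right_mono) (use q1 in simp)
  then show ?thesis unfolding e .
qed

lemma E1:
  assumes N: "1 \<le> N"
  shows "CS \<inter> {ys / q ^ N <..< xs / q ^ (N - 1)} = {}"
proof (rule ccontr)
  assume "CS \<inter> {ys / q ^ N <..< xs / q ^ (N - 1)} \<noteq> {}"
  then obtain c where c: "c \<in> CS" "ys / q ^ N < c" "c < xs / q ^ (N - 1)" by auto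
  have xpos: "0 < xs" by (rule xx_pos[OF q1 s1])
  have ypos: "0 < ys" by (rule yy_pos[OF q1 s1])
  from CS_cases[OF c(1)] consider "c = 0" | n a where "1 \<le> n" "a \<in> AS2" "c = a / q ^ n" | "xs \<le> c" by blast
  then show False
  proof cases
    case 1
    have "0 < ys / q ^ N" using ypos q1 by simp
    then show False using c 1 by simp
  next
    case 2
    have ab: "xs \<le> a" "a \<le> ys" using A_in_bounds[OF q1 s1 2(2)] by auto
    show False
    proof (cases "N \<le> n")
      case True
      have "c \<le> ys / q ^ n" using 2 ab q1 by (simp add: divide_right_mono)
      also have "\<dots> \<le> ys / q ^ N" using div_pow_anti[OF _ True] ypos by simp
      finally show False using c by simp
    next
      case False
      then have "n \<le> N - 1" by simp
      have "xs / q ^ (N - 1) \<le> xs / q ^ n" using div_pow_anti[OF _ \<open>n \<le> N - 1\<close>] xpos by simp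
      also have "\<dots> \<le> c" using 2 ab q1 by (simp add: divide_right_mono)
      finally show False using c by simp
    qed
  next
    case 3
    have "xs / q ^ (N - 1) \<le> xs / q ^ 0" using div_pow_anti[of xs 0 "N - 1"] xpos by simp
    then show False using 3 c by simp
  qed
qed

lemma E2: "ys / q ^ N \<in> CS" "xs / q ^ N \<in> CS"
  using A_div_in yy_AA[OF q1 s1] xx_AA[OF q1 s1] by auto

lemma CS_nonneg: "c \<in> CS \<Longrightarrow> 0 \<le> c" using CS_bounds by auto

lemma E3:
  assumes N: "1 \<le> N" and G: "G \<in> gaps CS" and Gb: "snd G \<le> ys / q ^ N"
  shows "glen G \<le> (q * xs - ys) / q ^ N"
proof -
  obtain u v where uv: "G = (u, v)" by (cases G)
  have u: "u \<in> CS" and v: "v \<in> CS" and uvl: "u < v" and empty: "{u<..<v} \<inter> CS = {}"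
    using G uv by (auto simp: gaps_def)
  have vb: "v \<le> ys / q ^ N" using Gb uv by simp
  have xpos: "0 < xs" by (rule xx_pos[OF q1 s1])
  have ypos: "0 < ys" by (rule yy_pos[OF q1 s1])
  have yN: "ys / q ^ N < xs" 
  proof -
    have "ys / q ^ N \<le> ys / q ^ 1" using div_pow_anti[OF _ N] ypos by simp
    also have "\<dots> < xs / q ^ 0" using yx_step[of 0] by simp
    finally show ?thesis by simp
  qed
  have hpos: "0 \<le> q * xs - ys" using Hy by simp
  have not_big: "\<not> xs \<le> c" if "c \<in> {u, v}" for c using that uvl vb yN by auto
  have u0: "0 \<le> u" using CS_nonneg[OF u] .
    from CS_cases[OF v] not_big[of v] obtain n' a' where v': "1 \<le> n'" "a' \<in> AS2" "v = a' / q ^ n'"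
    using uvl u0 by auto
  have a'b: "xs \<le> a'" "a' \<le> ys" using A_in_bounds[OF q1 s1 v'(2)] by auto
  have vlow: "xs / q ^ n' \<le> v" using v' a'b q1 by (simp add: divide_right_mono)
  have vhigh: "v \<le> ys / q ^ n'" using v' a'b q1 by (simp add: divide_right_mono)
  have n'N: "N \<le> n'"
  proof (rule ccontr)
    assume "\<not> N \<le> n'"
    then have "n' \<le> N - 1" by simp
    have "xs / q ^ (N - 1) \<le> xs / q ^ n'" using div_pow_anti[OF _ \<open>n' \<le> N - 1\<close>] xpos by simp
    moreover have "ys / q ^ N < xs / q ^ (N - 1)" using yx_step[of "N - 1"] N by simp
    ultimately show False using vlow vb by simp
  qed
  from CS_cases[OF u] not_big[of u] consider "u = 0" | n a where "1 \<le> n" "a \<in> AS2" "u = a / q ^ n"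
    by auto
  then show ?thesis
  proof cases
    case 1
    have "ys / q ^ Suc n' \<in> CS" by (rule E2)
    moreover have "0 < ys / q ^ Suc n'" using ypos q1 by simp
    moreover have "ys / q ^ Suc n' < v" using yx_step[of n'] vlow by simp
    ultimately show ?thesis using empty 1 by auto
  next
    case 2
    have ab: "xs \<le> a" "a \<le> ys" using A_in_bounds[OF q1 s1 2(2)] by auto
    have ulow: "xs / q ^ n \<le> u" using 2 ab q1 by (simp add: divide_right_mono)
    have uhigh: "u \<le> ys / q ^ n" using 2 ab q1 by (simp add: divide_right_mono)
    consider "n = n'" | "n' < n" | "n < n'" by linarith
    then show ?thesis
    proof cases
      case 1
      have P: "q ^ n > 0" using q1 by simp
      have "a / q ^ n < a' / q ^ n" using uvl 2(3) v'(3) 1 by simp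
      then have "a / q ^ n * q ^ n < a' / q ^ n * q ^ n" using P by (rule mult_strict_right_mono)
      then have aa: "a < a'" using P q1 by simp
      have "{a<..<a'} \<inter> AS2 = {}"
      proof (rule ccontr)
        assume "{a<..<a'} \<inter> AS2 \<noteq> {}"
        then obtain b where b: "b \<in> AS2" "a < b" "b < a'" by auto
        have "b / q ^ n \<in> CS" using A_div_in[OF b(1)] .
        moreover have "a / q ^ n < b / q ^ n" "b / q ^ n < a' / q ^ n"
          using b P by (auto simp: divide_strict_right_mono)
        then have "b / q ^ n \<in> {u<..<v}" using 2(3) v'(3) 1 by auto
        ultimately show False using empty by blast
      qed
      then have "(a, a') \<in> gaps AS2" using aa 2(2) v'(2) by (simp add: gaps_def)
      then have "a' - a \<le> (q * xs - ys) / q ^ 2" using A_gap_bound[OF q1 s1 Hy] by (force simp: glen_def)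
      then have "(a' - a) / q ^ n \<le> ((q * xs - ys) / q ^ 2) / q ^ n" by (rule divide_right_mono) (use P in simp)
      also have "\<dots> = (q * xs - ys) / q ^ (n + 2)" by (simp add: power_add divide_divide_eq_left mult.commute power2_eq_square)
      also have "\<dots> \<le> (q * xs - ys) / q ^ N" using div_pow_anti[OF hpos, of N "n + 2"] n'N 1 by simp
      finally show ?thesis using uv 2(3) v'(3) 1 by (simp add: glen_def diff_divide_distrib)
    next
      case 3: 2
      show ?thesis
      proof (cases "Suc n' < n")
        case True
        have "xs / q ^ (n - 1) \<in> CS" by (rule E2)
        moreover have "u < xs / q ^ (n - 1)" using uhigh yx_step[of "n - 1"] True by simp
        moreover have "xs / q ^ (n - 1) < v"
        proof -
          have "n' < n - 1" using True by simp
          then have "xs / q ^ (n - 1) < xs / q ^ n'" by (rule div_pow_anti_strict[OF xpos])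
          then show ?thesis using vlow by simp
        qed
        ultimately show ?thesis using empty by auto
      next
        case False
        then have nn: "n = Suc n'" using 3 by simp
        have ul: "ys / q ^ n \<le> u"
        proof (rule ccontr)
          assume "\<not> ys / q ^ n \<le> u"
          moreover have "ys / q ^ n < v" using yx_step[of n'] nn vlow by simp
          ultimately have "ys / q ^ n \<in> {u<..<v}" by simp
          moreover have "ys / q ^ n \<in> CS" by (rule E2)
          ultimately show False using empty by blast
        qed
        have vl: "v \<le> xs / q ^ n'"
        proof (rule ccontr)
          assume "\<not> v \<le> xs / q ^ n'"
          moreover have "u < xs / q ^ n'" using uhigh yx_step[of n'] nn by simp
          ultimately have "xs / q ^ n' \<in> {u<..<v}" by simp
          moreover have "xs / q ^ n' \<in> CS" by (rule E2)
          ultimately show False using empty by blast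
        qed
        have "v - u \<le> xs / q ^ n' - ys / q ^ n" using ul vl by simp
        also have "\<dots> = (q * xs - ys) / q ^ n" using nn q1 by (simp add: field_simps)
        also have "\<dots> \<le> (q * xs - ys) / q ^ N" using div_pow_anti[OF hpos, of N n] n'N nn by simp
        finally show ?thesis using uv by (simp add: glen_def)
      qed
    next
      case 3
      have "v \<le> ys / q ^ n'" by (rule vhigh)
      also have "\<dots> \<le> ys / q ^ Suc n" using div_pow_anti[OF _ , of ys "Suc n" n'] ypos 3 by simp
      also have "\<dots> < xs / q ^ n" by (rule yx_step)
      also have "\<dots> \<le> u" by (rule ulow)
      finally show ?thesis using uvl by simp
    qed
  qed
qed

end

end


lemma frac_le_cross: fixes a b c d :: real
  shows "b > 0 \<Longrightarrow> d > 0 \<Longrightarrow> a * d \<le> c * b \<Longrightarrow> a / b \<le> c / d"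
  by (simp add: field_simps)
lemma frac_less_cross: fixes a b c d :: real
  shows "b > 0 \<Longrightarrow> d > 0 \<Longrightarrow> a * d < c * b \<Longrightarrow> a / b < c / d"
  by (simp add: field_simps)

lemma ys_form: fixes q P Q :: real
  assumes "q - 1 \<noteq> 0" "Q - 1 \<noteq> 0" "P \<noteq> 0"
  shows "1 / (q - 1) - (P / (Q - 1)) / P = (Q - q) / ((q - 1) * (Q - 1))"
proof -
  have "1 / (q - 1) - (P / (Q - 1)) / P = 1 / (q - 1) - 1 / (Q - 1)" using assms by simp
  also have "\<dots> = (1 * (Q - 1) - 1 * (q - 1)) / ((q - 1) * (Q - 1))"
    by (rule diff_frac_eq[OF assms(1,2)])
  finally show ?thesis by simp
qed

lemma I1:
  fixes q P :: real
  assumes q1: "1 < q" and qP: "q \<le> P" and H: "q * P * (2 - q) < 1"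
  shows "1 / (q - 1) - (P / (q * P - 1)) / P < q * (P / (q * P - 1))"
proof -
  define Q where "Q = q * P"
  have Q1: "Q - 1 > 0" unfolding Q_def using q1 qP by (smt (verit) mult_le_cancel_left1)
  have P0: "P > 0" using q1 qP by simp
  have "Q * (2 - q) < q" using H q1 unfolding Q_def by linarith
  then have "Q - q < Q * (q - 1)" by (simp add: algebra_simps)
  then have "(Q - q) * (Q - 1) < (Q * (q - 1)) * (Q - 1)" using Q1 by (rule mult_strict_right_mono)
  then have "(Q - q) * (Q - 1) < (q * P) * ((q - 1) * (Q - 1))"
    unfolding Q_def by (simp add: mult.assoc)
  then have lt: "(Q - q) / ((q - 1) * (Q - 1)) < (q * P) / (Q - 1)"
    using Q1 q1 by (intro frac_less_cross) auto
  have "1 / (q - 1) - (P / (Q - 1)) / P = (Q - q) / ((q - 1) * (Q - 1))"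
    by (rule ys_form) (use Q1 q1 P0 in auto)
  also note lt
  also have "(q * P) / (Q - 1) = q * (P / (Q - 1))" by simp
  finally show ?thesis unfolding Q_def .
qed

lemma I2:
  fixes q P :: real
  assumes q1: "1 < q" and qP: "q \<le> P"
  shows "1 / (q - 1) - (P / (q * P - 1)) / P \<le> q * ((q * P - 1) / ((q - 1) * (q * (q * P) - 1)))"
proof -
  define Q where "Q = q * P"
  have Q1: "Q - 1 > 0" unfolding Q_def using q1 qP by (smt (verit) mult_le_cancel_left1)
  have qQ: "q * Q - 1 > 0" using Q1 q1 by (smt (verit) mult_le_cancel_left1)
  have P0: "P > 0" using q1 qP by simp
  have "(Q - q) * ((q - 1) * (q * Q - 1)) \<le> (q * (Q - 1)) * ((q - 1) * (Q - 1))"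
  proof -
    have "0 \<le> Q * ((q - 1) * (q - 1)) * (q - 1)" using Q1 q1 by simp
    then show ?thesis by (simp add: algebra_simps)
  qed
  then have le: "(Q - q) / ((q - 1) * (Q - 1)) \<le> (q * (Q - 1)) / ((q - 1) * (q * Q - 1))"
    using Q1 qQ q1 by (intro frac_le_cross) auto
  have "1 / (q - 1) - (P / (Q - 1)) / P = (Q - q) / ((q - 1) * (Q - 1))"
    by (rule ys_form) (use Q1 q1 P0 in auto)
  also note le
  also have "(q * (Q - 1)) / ((q - 1) * (q * Q - 1)) = q * ((Q - 1) / ((q - 1) * (q * Q - 1)))"
    by simp
  finally show ?thesis unfolding Q_def .
qed

lemma I3:
  fixes q P :: real
  assumes q1: "1 < q" and qP: "q \<le> P" and H: "q * P * (2 - q) < 1"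
  shows "(q * P - 1) / ((q - 1) * (q * (q * P) - 1)) < P / (q * P - 1)"
proof -
  define Q where "Q = q * P"
  have Q1: "Q - 1 > 0" unfolding Q_def using q1 qP by (smt (verit) mult_le_cancel_left1)
  have qQ: "q * Q - 1 > 0" using Q1 q1 by (smt (verit) mult_le_cancel_left1)
  have P0: "P > 0" using q1 qP by simp
  have HQ: "Q * (Q * (2 - q)) < Q * 1" using H Q1 unfolding Q_def
    by (intro mult_strict_left_mono) (auto simp: mult.assoc)
  have "(Q - 1) * (Q - 1) < P * ((q - 1) * (q * Q - 1))"
  proof -
    have "P * ((q - 1) * (q * Q - 1)) - (Q - 1) * (Q - 1) = Q * (Q * (q - 2)) + Q + P - 1"
      unfolding Q_def by (simp add: algebra_simps)
    moreover have "Q * (Q * (q - 2)) + Q > 0" using HQ by (simp add: algebra_simps)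
    moreover have "P - 1 > 0" using P0 q1 qP by simp
    ultimately show ?thesis by simp
  qed
  then have "(Q - 1) / ((q - 1) * (q * Q - 1)) < P / (Q - 1)"
    using Q1 qQ q1 by (intro frac_less_cross) auto
  then show ?thesis unfolding Q_def .
qed

lemma multinacci_gt1:
  assumes j: "2 \<le> j"
  shows "1 < multinacci j"
proof -
  define p where "p x = x ^ j - (\<Sum>i<j. x ^ i)" for x :: real
  have cont: "continuous_on {1..2} p" unfolding p_def by (intro continuous_intros)
  have p1: "p 1 < 0" using j by (simp add: p_def)
  have p2: "p 2 > 0"
  proof -
    have "(\<Sum>i<j. (2::real) ^ i) = 2 ^ j - 1"
      using geometric_sum[of "2::real" j] by simp
    then show ?thesis by (simp add: p_def)
  qed
  obtain r where r: "1 \<le> r" "r \<le> 2" "p r = 0"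
    using IVT'[of p 1 0 2] p1 p2 cont by force
  have r12: "1 < r" "r < 2" using r p1 p2 by (auto simp: order.order_iff_strict)
  have ratio: "(\<Sum>i<j. x ^ i / x ^ j) = 1" if "x > 0" "p x = 0" for x :: real
  proof -
    have "(\<Sum>i<j. x ^ i / x ^ j) = (\<Sum>i<j. x ^ i) / x ^ j" by (simp add: sum_divide_distrib)
    also have "\<dots> = 1"
    proof -
      have "x ^ j = (\<Sum>i<j. x ^ i)" using that(2) by (simp add: p_def)
      moreover have "x ^ j > 0" using that(1) by simp
      ultimately show ?thesis by simp
    qed
    finally show ?thesis .
  qed
  have uniq: "x = r" if "1 < x \<and> x < 2 \<and> x ^ j = (\<Sum>i<j. x ^ i)" for x
  proof (rule ccontr)
    assume "x \<noteq> r"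
    then consider "x < r" | "r < x" by linarith
    then show False
    proof cases
      case 1
      have "(\<Sum>i<j. r ^ i / r ^ j) < (\<Sum>i<j. x ^ i / x ^ j)"
        using sum_pow_div_strict[of x r j] 1 that j by auto
      then show False using ratio[of x] ratio[of r] r12 r that by (simp add: p_def)
    next
      case 2
      have "(\<Sum>i<j. x ^ i / x ^ j) < (\<Sum>i<j. r ^ i / r ^ j)"
        using sum_pow_div_strict[of r x j] 2 r12 j by auto
      then show False using ratio[of x] ratio[of r] r12 r that by (simp add: p_def)
    qed
  qed
  have rdef: "1 < r \<and> r < 2 \<and> r ^ j = (\<Sum>i<j. r ^ i)" using r12 r by (simp add: p_def)
  define P where "P x \<longleftrightarrow> 1 < x \<and> x < 2 \<and> x ^ j = (\<Sum>i<j. x ^ i)" for x :: real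
  have Pr: "P r" using rdef by (simp add: P_def)
  have Pu: "\<And>x. P x \<Longrightarrow> x = r" using uniq by (simp add: P_def)
  have "(THE x. P x) = r" by (rule the_equality[of P r, OF Pr Pu])
  moreover have "multinacci j = (THE x. P x)" unfolding multinacci_def P_def by simp
  ultimately show ?thesis using r12 by simp
qed

definition per :: "nat \<Rightarrow> nat \<Rightarrow> nat" where
  "per s n = (if n mod Suc (Suc s) = 0 then 0 else 1)"

lemma binary_per: "binary (per s)" by (simp add: binary_def per_def)

lemma per_period: "per s = scons 0 (pre 1 (Suc s) (per s))"
proof
  fix n show "per s n = scons 0 (pre 1 (Suc s) (per s)) n"
  proof (cases n)
    case 0 then show ?thesis by (simp add: per_def scons_def)
  next
    case (Suc m)
    show ?thesis
    proof (cases "m < Suc s")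
      case True
      then have "Suc m mod Suc (Suc s) = Suc m" by simp
      then show ?thesis using Suc True by (simp add: per_def scons_def pre_def)
    next
      case False
      then have "Suc m = (m - Suc s) + Suc (Suc s)" by simp
      then have "Suc m mod Suc (Suc s) = (m - Suc s) mod Suc (Suc s)" by (metis mod_add_self2)
      then show ?thesis using Suc False by (simp add: per_def scons_def pre_def)
    qed
  qed
qed

lemma pi_per_eq:
  assumes q1: "1 < q"
  shows "pi_q q (per s) = (cc q (Suc s) + pi_q q (per s) / q ^ Suc s) / q"
proof -
  have bp: "binary (pre 1 (Suc s) (per s))" by (rule binary_pre) (auto simp: binary_per)
  have e: "scons 0 (pre 1 (Suc s) (per s)) = per s" by (rule per_period[symmetric])
  have "pi_q q (scons 0 (pre 1 (Suc s) (per s))) = (real 0 + pi_q q (pre 1 (Suc s) (per s))) / q"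
    by (rule pi_scons[OF q1 bp]) simp
  then have h1: "pi_q q (per s) = pi_q q (pre 1 (Suc s) (per s)) / q"
    unfolding e by simp
  have h2: "pi_q q (pre 1 (Suc s) (per s)) = cc q (Suc s) + pi_q q (per s) / q ^ Suc s"
    using pi_pre[OF q1 binary_per[of s], of 1 "Suc s"] by simp
  show ?thesis using h1 unfolding h2 .
qed

lemma solve_w:
  fixes q Q w :: real
  assumes q1: "1 < q" and Q1: "1 < Q" and eq: "w = ((1 - 1 / Q) / (q - 1) + w / Q) / q"
  shows "w = (Q - 1) / ((q - 1) * (q * Q - 1))"
proof -
  have qQ: "q * Q - 1 > 0" using q1 Q1 by (smt (verit) mult_le_cancel_left1)
  have "w * q = (1 - 1 / Q) / (q - 1) + w / Q" using eq q1 by (simp add: field_simps)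
  then have "w * q * Q = (1 - 1 / Q) * Q / (q - 1) + w" using Q1 by (simp add: algebra_simps)
  also have "(1 - 1 / Q) * Q = Q - 1" using Q1 by (simp add: algebra_simps)
  finally have "w * q * Q - w = (Q - 1) / (q - 1)" by simp
  then have wq: "w * (q * Q - 1) = (Q - 1) / (q - 1)" by (simp add: algebra_simps)
  have "w = (w * (q * Q - 1)) / (q * Q - 1)" using qQ by simp
  also have "\<dots> = (Q - 1) / (q - 1) / (q * Q - 1)" unfolding wq ..
  finally show ?thesis unfolding divide_divide_eq_left .
qed

lemma pi_per:
  assumes q1: "1 < q"
  shows "pi_q q (per s) = (q * q ^ s - 1) / ((q - 1) * (q * (q * q ^ s) - 1))"
proof -
  have Q1: "1 < q * q ^ s" using q1 by (smt (verit) mult_le_cancel_left1 one_le_power)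
  have "cc q (Suc s) = (1 - 1 / (q * q ^ s)) / (q - 1)" by (simp add: cc_def[OF q1])
  then show ?thesis using solve_w[OF q1 Q1, of "pi_q q (per s)"] pi_per_eq[OF q1, of s] by simp
qed


lemma ep_eq:
  assumes s1: "1 \<le> s"
  shows "eventually_periodic (replicate (s - 1) 0) (0 # replicate (Suc s) 1) = pre 0 (s - 1) (per s)"
proof
  fix n
  show "eventually_periodic (replicate (s - 1) 0) (0 # replicate (Suc s) 1) n = pre 0 (s - 1) (per s) n"
  proof (cases "n < s - 1")
    case True then show ?thesis by (simp add: eventually_periodic_def pre_def)
  next
    case False
    define j where "j = (n - (s - 1)) mod Suc (Suc s)"
    have jl: "j < Suc (Suc s)" unfolding j_def by simp
    have L: "eventually_periodic (replicate (s - 1) 0) (0 # replicate (Suc s) 1) n = (0 # replicate (Suc s) 1) ! j"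
      using False unfolding eventually_periodic_def j_def by simp
    have R: "pre 0 (s - 1) (per s) n = (if j = 0 then 0 else 1)"
      using False unfolding pre_def per_def j_def by simp
    show ?thesis
    proof (cases j)
      case 0 then show ?thesis using L R by simp
    next
      case (Suc j')
      then have "j' < Suc s" using jl by simp
      then have "replicate (Suc s) (1::nat) ! j' = 1" by (rule nth_replicate)
      then show ?thesis using L R Suc by (simp del: replicate.simps)
    qed
  qed
qed

lemma epQ_eq:
  assumes s1: "1 \<le> s"
  shows "eventually_periodic (replicate (s - 1) 1) (1 # replicate (Suc s) 0) = cmp (pre 0 (s - 1) (per s))"
proof
  fix n
  show "eventually_periodic (replicate (s - 1) 1) (1 # replicate (Suc s) 0) n = cmp (pre 0 (s - 1) (per s)) n"
  proof (cases "n < s - 1")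
    case True then show ?thesis by (simp add: eventually_periodic_def pre_def cmp_def)
  next
    case False
    define j where "j = (n - (s - 1)) mod Suc (Suc s)"
    have jl: "j < Suc (Suc s)" unfolding j_def by simp
    have L: "eventually_periodic (replicate (s - 1) 1) (1 # replicate (Suc s) 0) n = (1 # replicate (Suc s) 0) ! j"
      using False unfolding eventually_periodic_def j_def by simp
    have R: "cmp (pre 0 (s - 1) (per s)) n = (if j = 0 then 1 else 0)"
      using False unfolding cmp_def pre_def per_def j_def by simp
    show ?thesis
    proof (cases j)
      case 0 then show ?thesis using L R by simp
    next
      case (Suc j')
      then have "j' < Suc s" using jl by simp
      then have "replicate (Suc s) (0::nat) ! j' = 0" by (rule nth_replicate)
      then show ?thesis using L R Suc by (simp del: replicate.simps)
    qed
  qed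
qed

lemma ones_eq: "eventually_periodic [] [1] = (\<lambda>_. 1)"
  by (rule ext) (simp add: eventually_periodic_def)

lemma g_iter_affine:
  assumes q0: "q > 0"
  shows "\<exists>\<alpha> \<beta>. \<alpha> > 0 \<and> (\<forall>x. (g_qk q k ^^ i) x = \<alpha> * x + \<beta>)"
proof (induction i)
  case 0 then show ?case by (intro exI[of _ 1] exI[of _ 0]) simp
next
  case (Suc i)
  then obtain \<alpha> \<beta> where ab: "\<alpha> > 0" "\<forall>x. (g_qk q k ^^ i) x = \<alpha> * x + \<beta>" by blast
  define c where "c = (\<Sum>j\<in>{1..k-1}. 1 / q ^ j)"
  have "(g_qk q k ^^ Suc i) x = (\<alpha> / q ^ k) * x + (\<beta> / q ^ k + c)" for x
    using ab(2) by (simp add: g_qk_def c_def add_divide_distrib)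
  moreover have "\<alpha> / q ^ k > 0" using ab(1) q0 by simp
  ultimately show ?case by blast
qed

lemma affine_image_Int:
  fixes \<alpha> \<beta> :: real
  assumes "\<alpha> > 0"
  shows "(\<lambda>x. \<alpha> * x + \<beta>) ` X \<inter> {\<alpha> * a + \<beta> .. \<alpha> * b + \<beta>} = (\<lambda>x. \<alpha> * x + \<beta>) ` (X \<inter> {a..b})"
  using assms by auto

lemma gaps_mirror:
  fixes c :: real
  assumes sym: "(\<lambda>x. c - x) ` K = K" and G: "(u, v) \<in> gaps K"
  shows "(c - v, c - u) \<in> gaps K"
proof -
  have mem: "c - x \<in> K" if "x \<in> K" for x using sym that by blast
  have u: "u \<in> K" and v: "v \<in> K" and uv: "u < v" and e: "{u<..<v} \<inter> K = {}"
    using G by (auto simp: gaps_def)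
  have "{c - v<..<c - u} \<inter> K = {}"
  proof (rule ccontr)
    assume "{c - v<..<c - u} \<inter> K \<noteq> {}"
    then obtain w where "w \<in> K" "c - v < w" "w < c - u" by auto
    then have "c - w \<in> {u<..<v} \<inter> K" using mem by auto
    then show False using e by blast
  qed
  then show ?thesis using mem[OF u] mem[OF v] uv by (simp add: gaps_def)
qed

lemma thick_main:
  fixes \<alpha> \<beta> :: real
  assumes bb: "bdd_below C" "bdd_above C" and ab: "a \<in> C" "b \<in> C" "a \<le> b"
    and Ha: "a = Inf C \<or> (\<exists>a'. (a',a) \<in> gaps C \<and> (\<forall>G\<in>gaps C. a \<le> fst G \<and> snd G \<le> b \<longrightarrow> glen G \<le> a - a'))"
    and Hb: "b = Sup C \<or> (\<exists>b'. (b,b') \<in> gaps C \<and> (\<forall>G\<in>gaps C. a \<le> fst G \<and> snd G \<le> b \<longrightarrow> glen G \<le> b' - b))"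
    and al: "\<alpha> > 0"
  shows "thickness C \<le> thickness ((\<lambda>x. \<alpha> * x + \<beta>) ` (C \<inter> {a..b}))"
proof -
  define D where "D = C \<inter> {a..b}"
  have bf: "bdd_below ((\<lambda>x. \<alpha> * x + \<beta>) ` D)" "bdd_above ((\<lambda>x. \<alpha> * x + \<beta>) ` D)"
  proof -
    have "(\<lambda>x. \<alpha> * x + \<beta>) ` D \<subseteq> {\<alpha> * a + \<beta> .. \<alpha> * b + \<beta>}" unfolding D_def using al by auto
    then show "bdd_below ((\<lambda>x. \<alpha> * x + \<beta>) ` D)" "bdd_above ((\<lambda>x. \<alpha> * x + \<beta>) ` D)"
      by (rule bdd_below_mono[rotated], simp, rule bdd_above_mono[rotated], simp)
  qed
  have "thickness C = tw C" by (rule thickness_eq_tw[OF bb])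
  also have "\<dots> \<le> tw D" unfolding D_def by (rule tw_restrict[OF bb ab Ha Hb])
  also have "\<dots> = tw ((\<lambda>x. \<alpha> * x + \<beta>) ` D)"
    by (rule tw_affine[where c=\<alpha> and d=\<beta> and a=a and b=b and K=D, symmetric]) (use al ab in \<open>auto simp: D_def\<close>)
  also have "\<dots> = thickness ((\<lambda>x. \<alpha> * x + \<beta>) ` D)" by (rule thickness_eq_tw[OF bf, symmetric])
  finally show ?thesis unfolding D_def .
qed


theorem lemma3p2:
  fixes m k :: nat and q :: real
  assumes "k \<ge> 3" and "multinacci (k - 1) < q" and "q < 2"
  shows "(\<forall>i\<le>m. thickness (P_set q k m i) \<ge> thickness (pi_q q ` S_set (k - 1))) \<and>
         thickness (Q_set q k m) \<ge> thickness (pi_q q ` S_set (k - 1))"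
proof -
  define s where "s = k - 2"
  have s1: "1 \<le> s" and kS: "k = Suc (Suc s)" using assms(1) by (auto simp: s_def)
  have k1: "k - 1 = Suc s" "k - 3 = s - 1" using kS by auto
  have "2 \<le> k - 1" using assms(1) by simp
  then have "1 < multinacci (k - 1)" by (rule multinacci_gt1)
  then have q1: "1 < q" using assms(2) by linarith
  have H: "q * q ^ s * (2 - q) < 1" using key_hyp[OF s1 _ assms(3) q1] assms(2) k1 by simp
  define C where "C = CC q s"
  have Ceq: "pi_q q ` S_set (k - 1) = C"
  proof -
    have "S_set (Suc s) = {e. inS s e}" by (auto simp: S_set_iff)
    then show ?thesis unfolding C_def CC_def[OF q1 s1] k1 by simp
  qed
  define xs where "xs = xx q s"
  define ys where "ys = yy q s"
  have qP: "q \<le> q ^ s" using q1 s1 power_increasing[of 1 s q] by simp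
  have xsd: "xs = q ^ s / (q * q ^ s - 1)" unfolding xs_def by (rule xx_def[OF q1 s1])
  have ysd: "ys = 1 / (q - 1) - xs / q ^ s" unfolding ys_def xs_def by (rule yy_def[OF q1 s1])
  have Hy: "ys < q * xs" using I1[OF q1 qP H] unfolding ysd xsd .
  have Hy': "yy q s < q * xx q s" using Hy unfolding xs_def ys_def .
  define w where "w = pi_q q (per s)"
  have wd: "w = (q * q ^ s - 1) / ((q - 1) * (q * (q * q ^ s) - 1))" unfolding w_def by (rule pi_per[OF q1])
  have yw: "ys \<le> q * w" using I2[OF q1 qP] unfolding ysd xsd wd .
  have wx: "w < xs" using I3[OF q1 qP H] unfolding wd xsd .
  have Cb: "C \<subseteq> {0 .. 1 / (q - 1)}" unfolding C_def by (rule CC_bounds[OF q1 s1])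
  have bC: "bdd_below C" "bdd_above C" using Cb by (auto intro: bdd_below_mono[rotated] bdd_above_mono[rotated])
  have C0: "0 \<in> C" unfolding C_def by (rule CC_0[OF q1 s1])
  have Ctop: "1 / (q - 1) \<in> C" unfolding C_def by (rule CC_top[OF q1 s1])
  have InfC: "Inf C = 0" using C0 Cb by (intro cInf_eq_minimum) auto
  have SupC: "Sup C = 1 / (q - 1)" using Ctop Cb by (intro cSup_eq_maximum) auto
  have sgf: "sg q = (\<lambda>x. 1 / (q - 1) - x)" by (rule ext) (simp add: sg_def[OF q1 s1])
  have Csym: "(\<lambda>x. 1 / (q - 1) - x) ` C = C" using CC_sym[OF q1 s1] unfolding C_def sgf .
  have Cmir: "1 / (q - 1) - c \<in> C" if "c \<in> C" for c using Csym that by blast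
  have qpow: "q ^ N = q * q ^ (N - 1)" if "1 \<le> N" for N :: nat
    using that by (metis Suc_diff_le diff_Suc_1 power_Suc)
  have bpos: "0 < q ^ n" for n :: nat using q1 by simp
    have gapN: "(ys / q ^ N, xs / q ^ (N - 1)) \<in> gaps C" if N: "1 \<le> N" for N
  proof -
    have "ys / q ^ N \<in> C" "xs / q ^ (N - 1) \<in> C" unfolding C_def xs_def ys_def using E2[OF q1 s1 Hy'] by auto
    moreover have "ys / q ^ N < xs / q ^ (N - 1)"
      using yx_step[OF q1 s1 Hy', of "N - 1"] N unfolding xs_def ys_def by (simp add: Suc_diff_le)
    moreover have "{ys / q ^ N <..< xs / q ^ (N - 1)} \<inter> C = {}"
      using E1[OF q1 s1 Hy' N] unfolding C_def xs_def ys_def by blast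
    ultimately show ?thesis by (simp add: gaps_def)
  qed
  have diffN: "xs / q ^ (N - 1) - ys / q ^ N = (q * xs - ys) / q ^ N" if N: "1 \<le> N" for N :: nat
  proof -
    have "xs / q ^ (N - 1) = (q * xs) / q ^ N" using qpow[OF N] q1 by simp
    then show ?thesis by (simp add: diff_divide_distrib)
  qed
  have boundN: "\<forall>G\<in>gaps C. 0 \<le> fst G \<and> snd G \<le> ys / q ^ N \<longrightarrow> glen G \<le> xs / q ^ (N - 1) - ys / q ^ N"
    if N: "1 \<le> N" for N
  proof (intro ballI impI)
    fix G assume G: "G \<in> gaps C" "0 \<le> fst G \<and> snd G \<le> ys / q ^ N"
    have "glen G \<le> (q * xx q s - yy q s) / q ^ N"
      using E3[OF q1 s1 Hy' N, of G] G unfolding C_def ys_def by simp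
    then have "glen G \<le> (q * xs - ys) / q ^ N" unfolding xs_def ys_def .
    then show "glen G \<le> xs / q ^ (N - 1) - ys / q ^ N" using diffN[OF N] by simp
  qed
  have cutN: "C \<inter> {0 .. w / q ^ (N - 1)} = C \<inter> {0 .. ys / q ^ N}" if N: "1 \<le> N" for N
  proof -
    have le: "ys / q ^ N \<le> w / q ^ (N - 1)"
    proof -
      have e: "ys / q ^ N = (ys / q) / q ^ (N - 1)" unfolding qpow[OF N] by simp
      have "ys / q \<le> w" using yw q1 by (simp add: divide_le_eq mult.commute)
      then have "(ys / q) / q ^ (N - 1) \<le> w / q ^ (N - 1)" by (rule divide_right_mono) (use bpos[of "N - 1"] in simp)
      then show ?thesis unfolding e .
    qed
    have lt: "w / q ^ (N - 1) < xs / q ^ (N - 1)" using wx bpos[of "N - 1"] by (simp add: divide_strict_right_mono)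
    have e: "{ys / q ^ N <..< xs / q ^ (N - 1)} \<inter> C = {}" using gapN[OF N] by (simp add: gaps_def)
    show ?thesis
    proof (intro set_eqI iffI)
      fix c assume c: "c \<in> C \<inter> {0 .. w / q ^ (N - 1)}"
      have "c \<le> ys / q ^ N"
      proof (rule ccontr)
        assume "\<not> c \<le> ys / q ^ N"
        then have "c \<in> {ys / q ^ N <..< xs / q ^ (N - 1)} \<inter> C" using c lt by auto
        then show False using e by blast
      qed
      then show "c \<in> C \<inter> {0 .. ys / q ^ N}" using c by auto
    next
      fix c assume "c \<in> C \<inter> {0 .. ys / q ^ N}"
      then show "c \<in> C \<inter> {0 .. w / q ^ (N - 1)}" using le by auto
    qed
  qed
  define ep where "ep = pre 0 (s - 1) (per s)"
  have bep: "binary ep" unfolding ep_def by (rule binary_pre) (auto simp: binary_per)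
  have piep: "pi_q q ep = w / q ^ (s - 1)"
    unfolding ep_def w_def using pi_pre[OF q1 binary_per[of s], of 0 "s - 1"] by simp
  have ep_k: "eventually_periodic (replicate (k - 3) 0) (0 # replicate (k - 1) 1) = ep"
    unfolding k1 ep_def by (rule ep_eq[OF s1])
  have epQ_k: "eventually_periodic (replicate (k - 3) 1) (1 # replicate (k - 1) 0) = cmp ep"
    unfolding k1 ep_def by (rule epQ_eq[OF s1])
    have Ppart: "thickness (pi_q q ` S_set (k - 1)) \<le> thickness (P_set q k m i)" if im: "i \<le> m" for i
  proof -
    define N where "N = s + (m - i) * k"
    have N1: "1 \<le> N" using s1 by (simp add: N_def)
    have Nm1: "N - 1 = (s - 1) + (m - i) * k" using s1 by (simp add: N_def)
    obtain \<alpha> \<beta> where ab: "\<alpha> > 0" "\<forall>x. (g_qk q k ^^ i) x = \<alpha> * x + \<beta>"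
      using g_iter_affine[where q=q and k=k and i=i] q1 by auto
    define t where "t = pi_q q ep / q ^ ((m - i) * k)"
    have tw: "t = w / q ^ (N - 1)" unfolding t_def piep Nm1 by (simp add: power_add)
    have "P_set q k m i = (\<lambda>x. \<alpha> * x + (\<alpha> + \<beta>)) ` C \<inter> {\<alpha> * 0 + (\<alpha> + \<beta>) .. \<alpha> * t + (\<alpha> + \<beta>)}"
    proof -
      have "(g_qk q k ^^ i) ` ((\<lambda>x. x + 1) ` pi_q q ` S_set (k - 1)) = (\<lambda>x. \<alpha> * x + (\<alpha> + \<beta>)) ` C"
        unfolding Ceq image_image using ab(2) by (simp add: algebra_simps)
      moreover have "(g_qk q k ^^ i) 1 = \<alpha> * 0 + (\<alpha> + \<beta>)" using ab(2) by simp
      moreover have "(g_qk q k ^^ i) (1 + t) = \<alpha> * t + (\<alpha> + \<beta>)" using ab(2) by (simp add: algebra_simps)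
      ultimately show ?thesis unfolding P_set_def ep_k t_def by simp
    qed
    also have "\<dots> = (\<lambda>x. \<alpha> * x + (\<alpha> + \<beta>)) ` (C \<inter> {0 .. t})" by (rule affine_image_Int[OF ab(1)])
    also have "C \<inter> {0 .. t} = C \<inter> {0 .. ys / q ^ N}" unfolding tw by (rule cutN[OF N1])
    finally have Peq: "P_set q k m i = (\<lambda>x. \<alpha> * x + (\<alpha> + \<beta>)) ` (C \<inter> {0 .. ys / q ^ N})" .
    have bin: "ys / q ^ N \<in> C" using gapN[OF N1] by (simp add: gaps_def)
    have "0 \<le> ys / q ^ N" using Cb bin by auto
    have "thickness C \<le> thickness ((\<lambda>x. \<alpha> * x + (\<alpha> + \<beta>)) ` (C \<inter> {0 .. ys / q ^ N}))"
    proof (rule thick_main[OF bC C0 bin \<open>0 \<le> ys / q ^ N\<close> _ _ ab(1)])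
      show "0 = Inf C \<or> (\<exists>a'. (a', 0) \<in> gaps C \<and>
          (\<forall>G\<in>gaps C. 0 \<le> fst G \<and> snd G \<le> ys / q ^ N \<longrightarrow> glen G \<le> 0 - a'))" using InfC by simp
      show "ys / q ^ N = Sup C \<or> (\<exists>b'. (ys / q ^ N, b') \<in> gaps C \<and>
          (\<forall>G\<in>gaps C. 0 \<le> fst G \<and> snd G \<le> ys / q ^ N \<longrightarrow> glen G \<le> b' - ys / q ^ N))"
        using gapN[OF N1] boundN[OF N1] by blast
    qed
    then show ?thesis unfolding Peq Ceq .
  qed
    have Qpart: "thickness (pi_q q ` S_set (k - 1)) \<le> thickness (Q_set q k m)"
  proof -
    obtain \<alpha> \<beta> where ab: "\<alpha> > 0" "\<forall>x. (g_qk q k ^^ m) x = \<alpha> * x + \<beta>"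
      using g_iter_affine[where q=q and k=k and i=m] q1 by auto
    define T where "T = 1 / (q - 1)"
    define b0 where "b0 = ys / q ^ s"
    define aQ where "aQ = pi_q q (cmp ep)"
    have aQd: "aQ = T - w / q ^ (s - 1)" unfolding aQ_def T_def using pi_cmp[OF q1 bep] piep by simp
    have top: "pi_q q (eventually_periodic [] [1]) = T" unfolding ones_eq T_def by (rule pi_ones[OF q1])
    have "Q_set q k m = (\<lambda>x. \<alpha> * x + \<beta>) ` C \<inter> {\<alpha> * aQ + \<beta> .. \<alpha> * T + \<beta>}"
      unfolding Q_set_def epQ_k top Ceq aQ_def[symmetric] using ab(2) by simp
    also have "\<dots> = (\<lambda>x. \<alpha> * x + \<beta>) ` (C \<inter> {aQ .. T})" by (rule affine_image_Int[OF ab(1)])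
    also have "C \<inter> {aQ .. T} = C \<inter> {T - b0 .. T}"
    proof (intro set_eqI iffI)
      fix c assume c: "c \<in> C \<inter> {aQ .. T}"
      then have "T - c \<in> C \<inter> {0 .. w / q ^ (s - 1)}" using Cmir[of c] aQd unfolding T_def by auto
      then have "T - c \<in> C \<inter> {0 .. ys / q ^ s}" using cutN[OF s1] by blast
      then show "c \<in> C \<inter> {T - b0 .. T}" using c unfolding b0_def by auto
    next
      fix c assume c: "c \<in> C \<inter> {T - b0 .. T}"
      then have "T - c \<in> C \<inter> {0 .. ys / q ^ s}" using Cmir[of c] unfolding T_def b0_def by auto
      then have "T - c \<in> C \<inter> {0 .. w / q ^ (s - 1)}" using cutN[OF s1] by blast
      then show "c \<in> C \<inter> {aQ .. T}" using c aQd by auto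
    qed
    finally have Qeq: "Q_set q k m = (\<lambda>x. \<alpha> * x + \<beta>) ` (C \<inter> {T - b0 .. T})" .
    have g0: "(b0, xs / q ^ (s - 1)) \<in> gaps C" unfolding b0_def by (rule gapN[OF s1])
    have g0m: "(T - xs / q ^ (s - 1), T - b0) \<in> gaps C"
      using gaps_mirror[OF Csym g0] unfolding T_def .
    have b0C: "b0 \<in> C" using g0 by (simp add: gaps_def)
    have aC: "T - b0 \<in> C" using Cmir[OF b0C] unfolding T_def .
    have TC: "T \<in> C" using Ctop unfolding T_def .
    have aT: "T - b0 \<le> T" using Cb b0C by auto
    have "thickness C \<le> thickness ((\<lambda>x. \<alpha> * x + \<beta>) ` (C \<inter> {T - b0 .. T}))"
    proof (rule thick_main[OF bC aC TC aT _ _ ab(1)])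
      show "T = Sup C \<or> (\<exists>b'. (T, b') \<in> gaps C \<and>
          (\<forall>G\<in>gaps C. T - b0 \<le> fst G \<and> snd G \<le> T \<longrightarrow> glen G \<le> b' - T))" using SupC unfolding T_def by simp
      have bnd: "\<forall>G\<in>gaps C. T - b0 \<le> fst G \<and> snd G \<le> T \<longrightarrow> glen G \<le> (T - b0) - (T - xs / q ^ (s - 1))"
      proof (intro ballI impI)
        fix G assume G: "G \<in> gaps C" "T - b0 \<le> fst G \<and> snd G \<le> T"
        obtain u v where uv: "G = (u, v)" by (cases G)
        have "(T - v, T - u) \<in> gaps C" using gaps_mirror[OF Csym] G uv unfolding T_def by simp
        moreover have "0 \<le> T - v" "T - u \<le> ys / q ^ s" using G uv unfolding b0_def by auto
        ultimately have "glen (T - v, T - u) \<le> xs / q ^ (s - 1) - ys / q ^ s"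
          using boundN[OF s1] by auto
        then show "glen G \<le> (T - b0) - (T - xs / q ^ (s - 1))" using uv unfolding b0_def by (simp add: glen_def)
      qed
      show "T - b0 = Inf C \<or> (\<exists>a'. (a', T - b0) \<in> gaps C \<and>
          (\<forall>G\<in>gaps C. T - b0 \<le> fst G \<and> snd G \<le> T \<longrightarrow> glen G \<le> (T - b0) - a'))"
        using g0m bnd by blast
    qed
    then show ?thesis unfolding Qeq Ceq .
  qed
  show ?thesis using Ppart Qpart by blast
qed


end
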